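(* In the LHARG setting with stochastic discount factor and risk-neutral measure $\mathbb{Q}$ as described in the context, assume $\nu_2=\lambda+\tfrac12$, let $Y^*=-\tfrac{\lambda^2}{2}-\nu_1+\tfrac18$ with $1-\theta Y^*>0$, and define the starred parameters $\beta_i^*=\beta_i/(1-\theta Y^* )$, $\alpha_j^*=\alpha_j/(1-\theta Y^* )$, $\theta^*=\theta/(1-\theta Y^* )$, $d^*=d/(1-\theta Y^* )$, $\delta^*=\delta$, $\gamma^*=\gamma+\lambda+\tfrac12$, $\lambda^*=-\tfrac12$. Then the risk-neutral moment generating function $\mathbb{E}^{\mathbb{Q}}[e^{zy_{t,T}}\mid\mathcal{F}_t]$ equals $\exp\big(A_t+\sum_{i=1}^pB_{t,i}\mathrm{RV}_{t+1-i}+\sum_{j=1}^qC_{t,j}\ell^*_{t+1-j}\big)$, where $A,B,C$ are given by the following recursion with the starred parameters: terminal conditions $A_T=B_{T,i}=C_{T,j}=0$, and for $s=T-1,\dots,t$, $$X_{s+1}=z\lambda^*+B_{s+1,1}+\frac{\tfrac12z^2+(\gamma^* )^2C_{s+1,1}-2C_{s+1,1}\gamma^*z}{1-2C_{s+1,1}},$$ $$A_s=A_{s+1}+zr-\tfrac12\ln(1-2C_{s+1,1})-\delta^*w(X_{s+1},\theta^* )+d^*v(X_{s+1},\theta^* ),$$ $$B_{s,i}=B_{s+1,i+1}\mathbf{1}_{\{i\le p-1\}}+v(X_{s+1},\theta^* )\beta^*_i,\qquad C_{s,j}=C_{s+1,j+1}\mathbf{1}_{\{j\le q-1\}}+v(X_{s+1},\theta^*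 )\alpha^*_j,$$ and $\ell^*_u=(\epsilon^*_u-\gamma^*\sqrt{\mathrm{RV}_u})^2$ with $\epsilon^*_u=\epsilon_u+(\lambda+\tfrac12)\sqrt{\mathrm{RV}_u}$ (so that $\ell^*_u=\ell_u$), whenever $1-2C_{s+1,1}>0$ and $\theta^*X_{s+1}<1$ for all $s$.
   Context: LHARG setting. Discrete time. $(\epsilon_t)$ are i.i.d. $\mathcal{N}(0,1)$ under $\mathbb{P}$ and $(\mathrm{RV}_t)$ is a positive process (realized variance); $\mathcal{F}_t$ is the $\sigma$-algebra generated by $\{\epsilon_u,\mathrm{RV}_u:u\le t\}$. Parameters: $r\in\mathbb{R}$ (risk-free rate), $\lambda\in\mathbb{R}$, $\delta>0$, $\theta>0$, $d\ge0$, $\gamma\in\mathbb{R}$, integers $p,q\ge1$, $\beta_1,\dots,\beta_p\ge0$, $\alpha_1,\dots,\alpha_q\ge0$. Leverage: $\ell_t=(\epsilon_t-\gamma\sqrt{\mathrm{RV}_t})^2$. Log-returns: $y_{t+1}=\ln(S_{t+1}/S_t)=r+\lambda\mathrm{RV}_{t+1}+\sqrt{\mathrm{RV}_{t+1}}\,\epsilon_{t+1}$, with $\epsilon_{t+1}$ independent of $(\mathcal{F}_t,\mathrm{RV}_{t+1})$; $y_{t,T}=\sum_{s=t+1}^Ty_s$. Conditionally on $\mathcal{F}_t$, $\mathrm{RV}_{t+1}$ has the noncentral gamma law $\bar\gamma(\delta,\Theta_t,\theta)$ with $\Theta_t=d+\sum_{i=1}^p\beta_i\mathrm{RV}_{t+1-i}+\sum_{j=1}^q\alpha_j\ell_{t+1-j}$.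 Here $\bar\gamma(\delta,\Theta,\theta)$ (shape $\delta$, noncentrality $\Theta\ge0$, scale $\theta$) is the law of $\theta G$ where, conditionally on $N\sim\mathrm{Poisson}(\Theta)$, $G\sim\mathrm{Gamma}(\delta+N,1)$; for $X\sim\bar\gamma(\delta,\Theta,\theta)$ and $\theta x<1$, $\mathbb{E}[e^{xX}]=\exp(-\delta w(x,\theta)+\Theta v(x,\theta))$, where $v(x,\theta)=\frac{\theta x}{1-\theta x}$ and $w(x,\theta)=\ln(1-\theta x)$. Stochastic discount factor: $M_{s,s+1}=e^{-\nu_1\mathrm{RV}_{s+1}-\nu_2y_{s+1}}/\mathbb{E}^{\mathbb{P}}[e^{-\nu_1\mathrm{RV}_{s+1}-\nu_2y_{s+1}}\mid\mathcal{F}_s]$; the measure $\mathbb{Q}$ is defined by $\mathbb{E}^{\mathbb{Q}}[X\mid\mathcal{F}_t]=\mathbb{E}^{\mathbb{P}}[M_{t,t+1}\cdots M_{T-1,T}X\mid\mathcal{F}_t]$ for $\mathcal{F}_T$-measurable $X$. *)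

theory Defs
  imports "HOL-Probability.Probability"
begin

definition gamma_density :: "real \<Rightarrow> real \<Rightarrow> real" where
  "gamma_density k x = (if x > 0 then x powr (k - 1) * exp (- x) / Gamma k else 0)"

definition gamma_measure :: "real \<Rightarrow> real measure" where
  "gamma_measure k = density lborel (\<lambda>x. ennreal (gamma_density k x))"

text \<open>Probability that a noncentral gamma variable with shape delta, noncentrality Theta and
  scale theta lies in B: law of theta*G where, given N ~ Poisson(Theta), G ~ Gamma(delta+N,1).\<close>
definition ncgamma_prob :: "real \<Rightarrow> real \<Rightarrow> real \<Rightarrow> real set \<Rightarrow> real" where
  "ncgamma_prob \<delta> \<Theta> \<theta> B =
     (\<Sum>n. exp (- \<Theta>) * \<Theta> ^ n / fact n * measure (gamma_measure (\<delta> + real n)) {g. \<theta> * g \<in> B})"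

definition vfun :: "real \<Rightarrow> real \<Rightarrow> real" where
  "vfun x \<theta> = \<theta> * x / (1 - \<theta> * x)"

definition wfun :: "real \<Rightarrow> real \<Rightarrow> real" where
  "wfun x \<theta> = ln (1 - \<theta> * x)"

definition filt :: "'a measure \<Rightarrow> (int \<Rightarrow> 'a \<Rightarrow> real) \<Rightarrow> (int \<Rightarrow> 'a \<Rightarrow> real) \<Rightarrow> int \<Rightarrow> 'a measure" where
  "filt M eps RV t = sigma (space M)
     {A. \<exists>u B. u \<le> t \<and> B \<in> sets borel \<and> (A = eps u -` B \<inter> space M \<or> A = RV u -` B \<inter> space M)}"

definition filt_plus :: "'a measure \<Rightarrow> (int \<Rightarrow> 'a \<Rightarrow> real) \<Rightarrow> (int \<Rightarrow> 'a \<Rightarrow> real) \<Rightarrow> int \<Rightarrow> 'a measure" where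
  "filt_plus M eps RV t = sigma (space M)
     (sets (filt M eps RV t) \<union> {RV (t + 1) -` B \<inter> space M | B. B \<in> sets borel})"

definition logret :: "real \<Rightarrow> real \<Rightarrow> (int \<Rightarrow> 'a \<Rightarrow> real) \<Rightarrow> (int \<Rightarrow> 'a \<Rightarrow> real) \<Rightarrow> int \<Rightarrow> 'a \<Rightarrow> real" where
  "logret r lm eps RV s \<omega> = r + lm * RV s \<omega> + sqrt (RV s \<omega>) * eps s \<omega>"

definition logret_sum :: "real \<Rightarrow> real \<Rightarrow> (int \<Rightarrow> 'a \<Rightarrow> real) \<Rightarrow> (int \<Rightarrow> 'a \<Rightarrow> real) \<Rightarrow> int \<Rightarrow> int \<Rightarrow> 'a \<Rightarrow> real" where
  "logret_sum r lm eps RV t T \<omega> = (\<Sum>s\<in>{t+1..T}. logret r lm eps RV s \<omega>)"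

definition lev :: "real \<Rightarrow> (int \<Rightarrow> 'a \<Rightarrow> real) \<Rightarrow> (int \<Rightarrow> 'a \<Rightarrow> real) \<Rightarrow> int \<Rightarrow> 'a \<Rightarrow> real" where
  "lev \<gamma> eps RV u \<omega> = (eps u \<omega> - \<gamma> * sqrt (RV u \<omega>))\<^sup>2"

definition Theta :: "real \<Rightarrow> nat \<Rightarrow> nat \<Rightarrow> (nat \<Rightarrow> real) \<Rightarrow> (nat \<Rightarrow> real) \<Rightarrow> real
     \<Rightarrow> (int \<Rightarrow> 'a \<Rightarrow> real) \<Rightarrow> (int \<Rightarrow> 'a \<Rightarrow> real) \<Rightarrow> int \<Rightarrow> 'a \<Rightarrow> real" where
  "Theta d p q \<beta> \<alpha> \<gamma> eps RV t \<omega> =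
     d + (\<Sum>i=1..p. \<beta> i * RV (t + 1 - int i) \<omega>) + (\<Sum>j=1..q. \<alpha> j * lev \<gamma> eps RV (t + 1 - int j) \<omega>)"

definition sdf :: "'a measure \<Rightarrow> real \<Rightarrow> real \<Rightarrow> real \<Rightarrow> real \<Rightarrow> (int \<Rightarrow> 'a \<Rightarrow> real) \<Rightarrow> (int \<Rightarrow> 'a \<Rightarrow> real)
     \<Rightarrow> int \<Rightarrow> 'a \<Rightarrow> real" where
  "sdf M r lm \<nu>1 \<nu>2 eps RV s \<omega> =
     exp (- \<nu>1 * RV (s + 1) \<omega> - \<nu>2 * logret r lm eps RV (s + 1) \<omega>) /
     real_cond_exp M (filt M eps RV s)
       (\<lambda>\<omega>'. exp (- \<nu>1 * RV (s + 1) \<omega>' - \<nu>2 * logret r lm eps RV (s + 1) \<omega>')) \<omega>"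

definition Q_cond_exp :: "'a measure \<Rightarrow> real \<Rightarrow> real \<Rightarrow> real \<Rightarrow> real \<Rightarrow> (int \<Rightarrow> 'a \<Rightarrow> real) \<Rightarrow> (int \<Rightarrow> 'a \<Rightarrow> real)
     \<Rightarrow> int \<Rightarrow> int \<Rightarrow> ('a \<Rightarrow> real) \<Rightarrow> 'a \<Rightarrow> real" where
  "Q_cond_exp M r lm \<nu>1 \<nu>2 eps RV t T X =
     real_cond_exp M (filt M eps RV t)
       (\<lambda>\<omega>. (\<Prod>s\<in>{t..<T}. sdf M r lm \<nu>1 \<nu>2 eps RV s \<omega>) * X \<omega>)"

text \<open>coef ... k gives (A_s, B_{s,.}, C_{s,.}) for s = T - k.\<close>
fun coef :: "real \<Rightarrow> real \<Rightarrow> real \<Rightarrow> real \<Rightarrow> real \<Rightarrow> real \<Rightarrow> nat \<Rightarrow> nat \<Rightarrow> (nat \<Rightarrow> real) \<Rightarrow> (nat \<Rightarrow> real)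
     \<Rightarrow> real \<Rightarrow> nat \<Rightarrow> real \<times> (nat \<Rightarrow> real) \<times> (nat \<Rightarrow> real)" where
  "coef r lm \<delta> \<theta> d \<gamma> p q \<beta> \<alpha> z 0 = (0, (\<lambda>_. 0), (\<lambda>_. 0))"
| "coef r lm \<delta> \<theta> d \<gamma> p q \<beta> \<alpha> z (Suc k) =
     (let (A', B', C') = coef r lm \<delta> \<theta> d \<gamma> p q \<beta> \<alpha> z k;
          X = z * lm + B' 1 + (z\<^sup>2 / 2 + \<gamma>\<^sup>2 * C' 1 - 2 * C' 1 * \<gamma> * z) / (1 - 2 * C' 1)
      in (A' + z * r - ln (1 - 2 * C' 1) / 2 - \<delta> * wfun X \<theta> + d * vfun X \<theta>,
          (\<lambda>i. (if i \<le> p - 1 then B' (i + 1) else 0) + vfun X \<theta> * \<beta> i),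
          (\<lambda>j. (if j \<le> q - 1 then C' (j + 1) else 0) + vfun X \<theta> * \<alpha> j)))"

text \<open>X_{s+1} for s = T - (k+1), computed from the time-(s+1) coefficients coef ... k.\<close>
definition Xcoef :: "real \<Rightarrow> real \<Rightarrow> real \<Rightarrow> real \<Rightarrow> real \<Rightarrow> real \<Rightarrow> nat \<Rightarrow> nat \<Rightarrow> (nat \<Rightarrow> real) \<Rightarrow> (nat \<Rightarrow> real)
     \<Rightarrow> real \<Rightarrow> nat \<Rightarrow> real" where
  "Xcoef r lm \<delta> \<theta> d \<gamma> p q \<beta> \<alpha> z k =
     (let (A', B', C') = coef r lm \<delta> \<theta> d \<gamma> p q \<beta> \<alpha> z k
      in z * lm + B' 1 + (z\<^sup>2 / 2 + \<gamma>\<^sup>2 * C' 1 - 2 * C' 1 * \<gamma> * z) / (1 - 2 * C' 1))"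

end

theory Submission
  imports Defs
begin

lemma gamma_density_nonneg: "k > 0 \<Longrightarrow> 0 \<le> gamma_density k x"
  unfolding gamma_density_def by (auto intro!: divide_nonneg_pos Gamma_real_pos)

lemma gamma_density_meas[measurable]: "gamma_density k \<in> borel_measurable borel"
  unfolding gamma_density_def by measurable

lemma gamma_density_int:
  assumes k: "k > 0"
  shows "(\<integral>\<^sup>+ x. ennreal (gamma_density k x) \<partial>lborel) = 1"
proof -
  have "((\<lambda>t. t powr (k - 1) / exp t) has_integral Gamma k) {0..}"
    using Gamma_integral_real[OF k] .
  hence "((\<lambda>t. if t \<in> {0..} then t powr (k - 1) / exp t else 0) has_integral Gamma k) UNIV"
    by (subst has_integral_restrict_UNIV)
  hence "((\<lambda>t. (if t \<in> {0..} then t powr (k - 1) / exp t else 0) / Gamma k) has_integral Gamma k / Gamma k) UNIV"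
    by (rule has_integral_divide)
  moreover have "(\<lambda>t. (if t \<in> {0..} then t powr (k - 1) / exp t else 0) / Gamma k) = gamma_density k"
    by (auto simp: gamma_density_def fun_eq_iff exp_minus field_simps)
  moreover have "Gamma k \<noteq> 0" using Gamma_real_pos[OF k] by simp
  ultimately have "(gamma_density k has_integral 1) UNIV" by simp
  thus ?thesis
    by (subst nn_integral_has_integral_lborel[where I=1]) (auto simp: gamma_density_nonneg k)
qed

lemma gamma_mgf:
  assumes k: "k > 0" and c: "c < 1"
  shows "(\<integral>\<^sup>+ x. ennreal (exp (c * x)) \<partial>gamma_measure k) = ennreal ((1 - c) powr (- k))"
proof -
  define L where "L = 1 - c"
  have L: "L > 0" using c by (simp add: L_def)
  have pt: "gamma_density k x * exp (c * x) = L powr (1 - k) * gamma_density k (L * x)" for x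
  proof (cases "x > 0")
    case True
    have "(L * x) powr (k - 1) = L powr (k - 1) * x powr (k - 1)"
      using True L by (simp add: powr_mult)
    moreover have "L powr (1 - k) * L powr (k - 1) = 1"
      using L by (simp add: powr_add[symmetric])
    moreover have "exp (- x) * exp (c * x) = exp (- (L * x))"
      by (simp add: L_def exp_add[symmetric] algebra_simps)
    ultimately show ?thesis using True L
      unfolding gamma_density_def
      by (simp add: field_simps)
  next
    case False
    thus ?thesis using L unfolding gamma_density_def by (simp add: mult_pos_pos zero_less_mult_iff)
  qed
  have aff: "(\<integral>\<^sup>+ x. ennreal (gamma_density k x) \<partial>lborel)
      = ennreal \<bar>L\<bar> * (\<integral>\<^sup>+ x. ennreal (gamma_density k (0 + L * x)) \<partial>lborel)"
    by (rule nn_integral_real_affine) (use L in auto)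
  hence I0: "ennreal L * (\<integral>\<^sup>+ x. ennreal (gamma_density k (L * x)) \<partial>lborel) = 1"
    using gamma_density_int[OF k] L by simp
  have I: "(\<integral>\<^sup>+ x. ennreal (gamma_density k (L * x)) \<partial>lborel) = ennreal (1 / L)"
  proof -
    have "ennreal (1 / L) * (ennreal L * (\<integral>\<^sup>+ x. ennreal (gamma_density k (L * x)) \<partial>lborel)) = ennreal (1 / L)"
      by (simp add: I0)
    moreover have "ennreal (1 / L) * ennreal L = 1"
      using L by (simp add: ennreal_mult'[symmetric])
    ultimately show ?thesis by (simp add: mult.assoc[symmetric])
  qed
  have "(\<integral>\<^sup>+ x. ennreal (exp (c * x)) \<partial>gamma_measure k)
      = (\<integral>\<^sup>+ x. ennreal (gamma_density k x) * ennreal (exp (c * x)) \<partial>lborel)"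
    unfolding gamma_measure_def by (subst nn_integral_density) auto
  also have "\<dots> = (\<integral>\<^sup>+ x. ennreal (L powr (1 - k)) * ennreal (gamma_density k (L * x)) \<partial>lborel)"
  proof (intro nn_integral_cong)
    fix x
    have "ennreal (gamma_density k x) * ennreal (exp (c * x)) = ennreal (gamma_density k x * exp (c * x))"
      by (simp add: ennreal_mult gamma_density_nonneg k)
    also have "\<dots> = ennreal (L powr (1 - k) * gamma_density k (L * x))" by (simp add: pt)
    also have "\<dots> = ennreal (L powr (1 - k)) * ennreal (gamma_density k (L * x))"
      by (simp add: ennreal_mult gamma_density_nonneg k)
    finally show "ennreal (gamma_density k x) * ennreal (exp (c * x)) = ennreal (L powr (1 - k)) * ennreal (gamma_density k (L * x))" .
  qed
  also have "\<dots> = ennreal (L powr (1 - k)) * ennreal (1 / L)"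
    by (subst nn_integral_cmult) (auto simp: I)
  also have "\<dots> = ennreal ((1 - c) powr (- k))"
    using L by (simp add: ennreal_mult'[symmetric] L_def[symmetric] powr_diff powr_minus divide_simps)
  finally show ?thesis .
qed

definition pois :: "real \<Rightarrow> nat \<Rightarrow> real" where
  "pois \<Theta> n = exp (- \<Theta>) * \<Theta> ^ n / fact n"

definition ncg_int :: "real \<Rightarrow> real \<Rightarrow> (real \<Rightarrow> ennreal) \<Rightarrow> real \<Rightarrow> ennreal" where
  "ncg_int \<delta> \<theta> h \<Theta> = (\<Sum>n. ennreal (pois \<Theta> n) * (\<integral>\<^sup>+ g. h (\<theta> * g) \<partial>gamma_measure (\<delta> + real n)))"

lemma pois_nonneg: "\<Theta> \<ge> 0 \<Longrightarrow> pois \<Theta> n \<ge> 0"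
  unfolding pois_def by simp

lemma pois_meas[measurable]: "(\<lambda>x. pois x n) \<in> borel_measurable borel"
  unfolding pois_def by measurable

lemma ncg_int_meas[measurable]: "ncg_int \<delta> \<theta> h \<in> borel_measurable borel"
  unfolding ncg_int_def by measurable

lemma pois_sums: "(\<lambda>n. pois \<Theta> n * x ^ n) sums (exp (- \<Theta>) * exp (\<Theta> * x))"
proof -
  have "(\<lambda>n. (\<Theta> * x) ^ n /\<^sub>R fact n) sums exp (\<Theta> * x)" by (rule exp_converges)
  hence "(\<lambda>n. exp (- \<Theta>) * ((\<Theta> * x) ^ n /\<^sub>R fact n)) sums (exp (- \<Theta>) * exp (\<Theta> * x))"
    by (rule sums_mult)
  thus ?thesis by (simp add: pois_def power_mult_distrib field_simps)
qed

lemma prob_space_gamma: "k > 0 \<Longrightarrow> prob_space (gamma_measure k)"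
  unfolding gamma_measure_def
  by (rule prob_spaceI) (simp add: emeasure_density gamma_density_int)

lemma ncg_mgf:
  assumes \<delta>: "\<delta> > 0" and \<theta>: "\<theta> > 0" and \<Theta>: "\<Theta> \<ge> 0" and m: "\<theta> * \<mu> < 1"
  shows "ncg_int \<delta> \<theta> (\<lambda>x. ennreal (exp (\<mu> * x))) \<Theta> = ennreal (exp (- \<delta> * wfun \<mu> \<theta> + \<Theta> * vfun \<mu> \<theta>))"
proof -
  define L where "L = 1 - \<theta> * \<mu>"
  have L: "L > 0" using m by (simp add: L_def)
  have trm: "ennreal (pois \<Theta> n) * (\<integral>\<^sup>+ g. ennreal (exp (\<mu> * (\<theta> * g))) \<partial>gamma_measure (\<delta> + real n))
      = ennreal (L powr (- \<delta>) * (pois \<Theta> n * (1 / L) ^ n))" for n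
  proof -
    have "(\<integral>\<^sup>+ g. ennreal (exp (\<mu> * (\<theta> * g))) \<partial>gamma_measure (\<delta> + real n))
        = (\<integral>\<^sup>+ g. ennreal (exp ((\<theta> * \<mu>) * g)) \<partial>gamma_measure (\<delta> + real n))"
      by (simp add: mult_ac)
    also have "\<dots> = ennreal (L powr (- (\<delta> + real n)))"
      unfolding L_def using \<delta> m by (intro gamma_mgf) auto
    also have "L powr (- (\<delta> + real n)) = L powr (- \<delta>) * (1 / L) ^ n"
    proof -
      have "L powr (- (\<delta> + real n)) = L powr (- \<delta>) * L powr (- real n)"
        by (simp add: powr_add[symmetric])
      moreover have "L powr (- real n) = (1 / L) ^ n"
        using L by (simp add: powr_minus powr_realpow power_one_over divide_inverse power_inverse)
      ultimately show ?thesis by simp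
    qed
    finally show ?thesis
      using pois_nonneg[OF \<Theta>] L by (simp add: ennreal_mult[symmetric] mult_ac)
  qed
  have S: "(\<lambda>n. L powr (- \<delta>) * (pois \<Theta> n * (1 / L) ^ n)) sums (L powr (- \<delta>) * (exp (- \<Theta>) * exp (\<Theta> * (1 / L))))"
    by (intro sums_mult pois_sums)
  have "ncg_int \<delta> \<theta> (\<lambda>x. ennreal (exp (\<mu> * x))) \<Theta> = (\<Sum>n. ennreal (L powr (- \<delta>) * (pois \<Theta> n * (1 / L) ^ n)))"
    unfolding ncg_int_def by (simp add: trm)
  also have "\<dots> = ennreal (L powr (- \<delta>) * (exp (- \<Theta>) * exp (\<Theta> * (1 / L))))"
    using S pois_nonneg[OF \<Theta>] L sums_summable[OF pois_sums[of \<Theta> "1 / L"]]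
    by (subst suminf_ennreal2) (auto simp: sums_unique[symmetric] sums_summable)
  also have "L powr (- \<delta>) * (exp (- \<Theta>) * exp (\<Theta> * (1 / L))) = exp (- \<delta> * wfun \<mu> \<theta> + \<Theta> * vfun \<mu> \<theta>)"
  proof -
    have "L powr (- \<delta>) = exp (- \<delta> * ln L)" using L by (simp add: powr_def)
    moreover have "- \<Theta> + \<Theta> * (1 / L) = \<Theta> * (\<theta> * \<mu> / L)"
      using L by (simp add: L_def field_simps)
    ultimately show ?thesis
      by (simp add: wfun_def vfun_def L_def[symmetric] exp_add[symmetric] algebra_simps)
         (simp add: L_def field_simps)
  qed
  finally show ?thesis .
qed

lemma ncg_indicator:
  assumes \<delta>: "\<delta> > 0" and \<Theta>: "\<Theta> \<ge> 0" and B: "B \<in> sets borel"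
  shows "ncg_int \<delta> \<theta> (indicator B) \<Theta> = ennreal (ncgamma_prob \<delta> \<Theta> \<theta> B)"
proof -
  have m: "measure (gamma_measure (\<delta> + real n)) {g. \<theta> * g \<in> B} \<le> 1" for n
    using \<delta> by (intro prob_space.prob_le_1 prob_space_gamma) auto
  have t: "(\<integral>\<^sup>+ g. indicator B (\<theta> * g) \<partial>gamma_measure (\<delta> + real n))
      = ennreal (measure (gamma_measure (\<delta> + real n)) {g. \<theta> * g \<in> B})" for n
  proof -
    interpret prob_space "gamma_measure (\<delta> + real n)" using \<delta> by (intro prob_space_gamma) auto
    have sb: "{g. \<theta> * g \<in> B} \<in> sets (gamma_measure (\<delta> + real n))"
      using B unfolding gamma_measure_def by (simp, measurable)
    have "(\<integral>\<^sup>+ g. indicator B (\<theta> * g) \<partial>gamma_measure (\<delta> + real n))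
        = (\<integral>\<^sup>+ g. indicator {g. \<theta> * g \<in> B} g \<partial>gamma_measure (\<delta> + real n))"
      by (intro nn_integral_cong) (auto simp: indicator_def)
    also have "\<dots> = emeasure (gamma_measure (\<delta> + real n)) {g. \<theta> * g \<in> B}"
      using sb by simp
    finally show ?thesis by (simp add: emeasure_eq_measure)
  qed
  have sm: "summable (\<lambda>n. pois \<Theta> n * measure (gamma_measure (\<delta> + real n)) {g. \<theta> * g \<in> B})"
  proof (rule summable_comparison_test)
    show "\<exists>N. \<forall>n\<ge>N. norm (pois \<Theta> n * measure (gamma_measure (\<delta> + real n)) {g. \<theta> * g \<in> B}) \<le> pois \<Theta> n * 1 ^ n"
      using m pois_nonneg[OF \<Theta>] by (auto intro!: mult_left_le)
    show "summable (\<lambda>n. pois \<Theta> n * 1 ^ n)" using pois_sums by (rule sums_summable)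
  qed
  have "ncg_int \<delta> \<theta> (indicator B) \<Theta> = (\<Sum>n. ennreal (pois \<Theta> n * measure (gamma_measure (\<delta> + real n)) {g. \<theta> * g \<in> B}))"
    unfolding ncg_int_def t using pois_nonneg[OF \<Theta>] by (simp add: ennreal_mult)
  also have "\<dots> = ennreal (\<Sum>n. pois \<Theta> n * measure (gamma_measure (\<delta> + real n)) {g. \<theta> * g \<in> B})"
    using sm pois_nonneg[OF \<Theta>] by (intro suminf_ennreal2) auto
  finally show ?thesis unfolding ncgamma_prob_def pois_def by (simp add: mult_ac)
qed

lemma ncg_le1:
  assumes \<delta>: "\<delta> > 0" and \<theta>: "\<theta> > 0" and \<Theta>: "\<Theta> \<ge> 0" and B: "B \<in> sets borel"
  shows "ncg_int \<delta> \<theta> (indicator B) \<Theta> \<le> 1"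
proof -
  have "ncg_int \<delta> \<theta> (indicator B) \<Theta> \<le> ncg_int \<delta> \<theta> (\<lambda>x. ennreal (exp (0 * x))) \<Theta>"
    unfolding ncg_int_def
    by (intro suminf_le mult_left_mono nn_integral_mono) (auto simp: indicator_def)
  also have "\<dots> = 1" using ncg_mgf[OF \<delta> \<theta> \<Theta>, of 0] by (simp add: wfun_def vfun_def)
  finally show ?thesis .
qed

lemma ncg_add:
  assumes "h1 \<in> borel_measurable borel" "h2 \<in> borel_measurable borel"
  shows "ncg_int \<delta> \<theta> (\<lambda>x. h1 x + h2 x) \<Theta> = ncg_int \<delta> \<theta> h1 \<Theta> + ncg_int \<delta> \<theta> h2 \<Theta>"
proof -
  have "\<And>n. ennreal (pois \<Theta> n) * (\<integral>\<^sup>+ g. h1 (\<theta> * g) + h2 (\<theta> * g) \<partial>gamma_measure (\<delta> + real n))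
     = ennreal (pois \<Theta> n) * (\<integral>\<^sup>+ g. h1 (\<theta> * g) \<partial>gamma_measure (\<delta> + real n))
       + ennreal (pois \<Theta> n) * (\<integral>\<^sup>+ g. h2 (\<theta> * g) \<partial>gamma_measure (\<delta> + real n))"
    using assms by (simp add: nn_integral_add gamma_measure_def distrib_left)
  thus ?thesis unfolding ncg_int_def
    by (simp add: suminf_add[OF summableI summableI])
qed

lemma ncg_cmult:
  assumes "h \<in> borel_measurable borel"
  shows "ncg_int \<delta> \<theta> (\<lambda>x. c * h x) \<Theta> = c * ncg_int \<delta> \<theta> h \<Theta>"
  unfolding ncg_int_def using assms
  by (subst ennreal_suminf_cmult[symmetric]) (auto simp: nn_integral_cmult gamma_measure_def mult_ac intro!: suminf_cong)

lemma ncg_SUP: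
  assumes "\<And>i. U i \<in> borel_measurable borel" "incseq U"
  shows "ncg_int \<delta> \<theta> (SUP i. U i) \<Theta> = (SUP i. ncg_int \<delta> \<theta> (U i) \<Theta>)"
proof -
  have inc: "incseq (\<lambda>i. U i (\<theta> * g))" for g using assms(2) by (auto simp: incseq_def le_fun_def)
  have mc: "(\<integral>\<^sup>+ g. (SUP i. U i) (\<theta> * g) \<partial>gamma_measure (\<delta> + real n))
     = (SUP i. \<integral>\<^sup>+ g. U i (\<theta> * g) \<partial>gamma_measure (\<delta> + real n))" for n
  proof -
    have "(\<integral>\<^sup>+ g. (SUP i. U i) (\<theta> * g) \<partial>gamma_measure (\<delta> + real n))
       = (\<integral>\<^sup>+ g. (SUP i. (\<lambda>g. U i (\<theta> * g)) g) \<partial>gamma_measure (\<delta> + real n))"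
      by (auto simp: image_comp comp_def intro!: nn_integral_cong)
    also have "\<dots> = (SUP i. \<integral>\<^sup>+ g. U i (\<theta> * g) \<partial>gamma_measure (\<delta> + real n))"
      using assms inc
      by (intro nn_integral_monotone_convergence_SUP) (auto simp: gamma_measure_def incseq_def le_fun_def)
    finally show ?thesis .
  qed
  have "ncg_int \<delta> \<theta> (SUP i. U i) \<Theta>
     = (\<Sum>n. ennreal (pois \<Theta> n) * (SUP i. \<integral>\<^sup>+ g. U i (\<theta> * g) \<partial>gamma_measure (\<delta> + real n)))"
    unfolding ncg_int_def mc ..
  also have "\<dots> = (\<Sum>n. SUP i. ennreal (pois \<Theta> n) * (\<integral>\<^sup>+ g. U i (\<theta> * g) \<partial>gamma_measure (\<delta> + real n)))"
    by (simp add: SUP_mult_left_ennreal)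
  also have "\<dots> = (SUP i. \<Sum>n. ennreal (pois \<Theta> n) * (\<integral>\<^sup>+ g. U i (\<theta> * g) \<partial>gamma_measure (\<delta> + real n)))"
    using inc
    by (intro ennreal_suminf_SUP_eq)
       (auto simp: incseq_def intro!: mult_left_mono nn_integral_mono)
  finally show ?thesis unfolding ncg_int_def .
qed

locale lharg =
  fixes M :: "'a measure" and eps RV :: "int \<Rightarrow> 'a \<Rightarrow> real"
    and \<delta> \<theta> d \<gamma> :: real and p q :: nat and \<beta> \<alpha> :: "nat \<Rightarrow> real" and t0 :: int
  assumes P: "prob_space M"
    and eps_dist: "\<forall>u. distributed M lborel (eps u) std_normal_density"
    and RV_meas: "\<forall>u. RV u \<in> borel_measurable M"
    and RV_pos: "\<forall>u. \<forall>\<omega>\<in>space M. RV u \<omega> > 0"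
    and \<delta>_pos: "\<delta> > 0" and \<theta>_pos: "\<theta> > 0" and d_nonneg: "d \<ge> 0"
    and \<beta>_nonneg: "\<forall>i. \<beta> i \<ge> 0" and \<alpha>_nonneg: "\<forall>j. \<alpha> j \<ge> 0"
    and eps_indep_past: "\<forall>s\<ge>t0. prob_space.indep_set M
            {eps (s + 1) -` B \<inter> space M | B. B \<in> sets borel} (sets (filt_plus M eps RV s))"
    and RV_cond_law: "\<forall>s\<ge>t0. \<forall>A\<in>sets (filt M eps RV s). \<forall>B\<in>sets (borel :: real measure).
            measure M (A \<inter> (RV (s + 1) -` B \<inter> space M)) =
            (\<integral>\<omega>. indicator A \<omega> * ncgamma_prob \<delta> (Theta d p q \<beta> \<alpha> \<gamma> eps RV s \<omega>) \<theta> B \<partial>M)"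
begin

sublocale prob_space M by (rule P)

abbreviation "F s \<equiv> filt M eps RV s"
abbreviation "Fp s \<equiv> filt_plus M eps RV s"

definition "Gen s = {A. \<exists>u B. u \<le> s \<and> B \<in> sets borel \<and> (A = eps u -` B \<inter> space M \<or> A = RV u -` B \<inter> space M)}"

lemma eps_meas[measurable]: "eps u \<in> borel_measurable M"
  using distributed_measurable[OF eps_dist[rule_format, of u]] by simp

lemma RV_meas'[measurable]: "RV u \<in> borel_measurable M"
  using RV_meas by simp

lemma GenI1: "u \<le> s \<Longrightarrow> B \<in> sets borel \<Longrightarrow> eps u -` B \<inter> space M \<in> Gen s"
  unfolding Gen_def by blast

lemma GenI2: "u \<le> s \<Longrightarrow> B \<in> sets borel \<Longrightarrow> RV u -` B \<inter> space M \<in> Gen s"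
  unfolding Gen_def by blast

lemma Gen_mono: "s \<le> s' \<Longrightarrow> Gen s \<subseteq> Gen s'"
proof
  fix A assume ss: "s \<le> s'" and "A \<in> Gen s"
  then obtain u B where "u \<le> s" "B \<in> sets borel" "A = eps u -` B \<inter> space M \<or> A = RV u -` B \<inter> space M"
    unfolding Gen_def by blast
  thus "A \<in> Gen s'" using ss GenI1[of u s' B] GenI2[of u s' B] by auto
qed

lemma Gen_sets: "Gen s \<subseteq> sets M"
  unfolding Gen_def by auto

lemma Gen_Pow: "Gen s \<subseteq> Pow (space M)"
  unfolding Gen_def by auto

lemma sets_F: "sets (F s) = sigma_sets (space M) (Gen s)"
  unfolding filt_def Gen_def[symmetric] using Gen_Pow by (simp add: sets_measure_of)

lemma space_F[simp]: "space (F s) = space M"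
  unfolding filt_def by (simp add: space_measure_of_conv)

lemma F_subalg: "subalgebra M (F s)"
  unfolding subalgebra_def sets_F by (simp add: sets.sigma_sets_subset[OF Gen_sets])

lemma F_sfs: "sigma_finite_subalgebra M (F s)"
  by (rule finite_measure_subalgebra_is_sigma_finite, unfold_locales) (rule F_subalg)

lemma F_mono: "s \<le> s' \<Longrightarrow> sets (F s) \<subseteq> sets (F s')"
  unfolding sets_F by (rule sigma_sets_mono') (rule Gen_mono)

lemma F_subalg2: "s \<le> s' \<Longrightarrow> subalgebra (F s') (F s)"
  unfolding subalgebra_def using F_mono by auto

lemma meas_F_mono: "f \<in> borel_measurable (F s) \<Longrightarrow> s \<le> s' \<Longrightarrow> f \<in> borel_measurable (F s')"
  by (rule measurable_from_subalg[OF F_subalg2])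

lemma meas_F_M: "f \<in> borel_measurable (F s) \<Longrightarrow> f \<in> borel_measurable M"
  by (rule measurable_from_subalg[OF F_subalg])

lemma Gen_F: "A \<in> Gen s \<Longrightarrow> A \<in> sets (F s)"
  unfolding sets_F by (rule sigma_sets.Basic)

lemma RV_F: "u \<le> s \<Longrightarrow> RV u \<in> borel_measurable (F s)"
  by (rule measurableI) (auto intro!: Gen_F GenI2)

lemma eps_F: "u \<le> s \<Longrightarrow> eps u \<in> borel_measurable (F s)"
  by (rule measurableI) (auto intro!: Gen_F GenI1)

lemma lev_F: "u \<le> s \<Longrightarrow> lev c eps RV u \<in> borel_measurable (F s)"
proof -
  assume "u \<le> s"
  note [measurable] = RV_F[OF this] eps_F[OF this]
  show ?thesis unfolding lev_def by measurable
qed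

lemma Theta_F: "Theta d p q \<beta> \<alpha> \<gamma> eps RV s \<in> borel_measurable (F s)"
proof -
  have [measurable]: "RV (s + 1 - int i) \<in> borel_measurable (F s)" if "i \<in> {1..p}" for i
    using that by (intro RV_F) auto
  have [measurable]: "lev \<gamma> eps RV (s + 1 - int j) \<in> borel_measurable (F s)" if "j \<in> {1..q}" for j
    using that by (intro lev_F) auto
  show ?thesis unfolding Theta_def
    by (intro borel_measurable_add borel_measurable_sum borel_measurable_const borel_measurable_times)
       (auto simp del: of_nat_Suc)
qed

lemma Theta_nonneg: "\<omega> \<in> space M \<Longrightarrow> Theta d p q \<beta> \<alpha> \<gamma> eps RV s \<omega> \<ge> 0"
  unfolding Theta_def using d_nonneg \<beta>_nonneg \<alpha>_nonneg RV_pos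
  by (intro add_nonneg_nonneg sum_nonneg mult_nonneg_nonneg) (auto simp: lev_def less_imp_le)

lemma sets_Fp: "sets (Fp s) = sigma_sets (space M) (sets (F s) \<union> {RV (s + 1) -` B \<inter> space M | B. B \<in> sets borel})"
proof -
  have "sets (F s) \<subseteq> Pow (space M)" using sets.space_closed[of "F s"] by auto
  thus ?thesis unfolding filt_plus_def by (subst sets_measure_of) auto
qed

lemma space_Fp[simp]: "space (Fp s) = space M"
  unfolding filt_plus_def by (simp add: space_measure_of_conv)

lemma Fp_sub_F1: "sets (Fp s) \<subseteq> sets (F (s + 1))"
  unfolding sets_Fp
proof (rule sets.sigma_sets_subset[of _ "F (s + 1)", simplified])
  show "sets (F s) \<union> {RV (s + 1) -` B \<inter> space M |B. B \<in> sets borel} \<subseteq> sets (F (s + 1))"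
    using F_mono[of s "s+1"] by (auto intro!: Gen_F GenI2)
qed

lemma F_sub_Fp: "sets (F s) \<subseteq> sets (Fp s)"
  unfolding sets_Fp by auto

lemma Fp_subalg: "subalgebra M (Fp s)"
  using Fp_sub_F1[of s] F_subalg[of "s+1"] unfolding subalgebra_def by auto

lemma F_Fp_meas: "f \<in> borel_measurable (F s) \<Longrightarrow> f \<in> borel_measurable (Fp s)"
  by (rule measurable_from_subalg) (use F_sub_Fp in \<open>auto simp: subalgebra_def\<close>)

lemma RV_Fp: "RV (s + 1) \<in> borel_measurable (Fp s)"
  by (rule measurableI) (auto simp: sets_Fp)

end

lemma ext_cond:
  assumes sfs: "sigma_finite_subalgebra M F"
    and X[measurable]: "X \<in> borel_measurable M" and Y[measurable]: "Y \<in> borel_measurable F"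
    and eq: "\<And>A. A \<in> sets F \<Longrightarrow> (\<integral>\<^sup>+ x. indicator A x * X x \<partial>M) = (\<integral>\<^sup>+ x. indicator A x * Y x \<partial>M)"
    and g[measurable]: "g \<in> borel_measurable F"
  shows "(\<integral>\<^sup>+ x. g x * X x \<partial>M) = (\<integral>\<^sup>+ x. g x * Y x \<partial>M)"
proof -
  interpret sigma_finite_subalgebra M F by (rule sfs)
  have "AE x in M. Y x = nn_cond_exp M F X x"
  proof (rule nn_cond_exp_charact)
    fix A assume A: "A \<in> sets F"
    have e1: "(\<lambda>x. X x * indicator A x) = (\<lambda>x. indicator A x * X x)" by (simp add: fun_eq_iff mult.commute)
    have e2: "(\<lambda>x. Y x * indicator A x) = (\<lambda>x. indicator A x * Y x)" by (simp add: fun_eq_iff mult.commute)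
    show "(\<integral>\<^sup>+ x\<in>A. X x \<partial>M) = (\<integral>\<^sup>+ x\<in>A. Y x \<partial>M)" unfolding e1 e2 by (rule eq[OF A])
  qed auto
  hence "(\<integral>\<^sup>+ x. g x * Y x \<partial>M) = (\<integral>\<^sup>+ x. g x * nn_cond_exp M F X x \<partial>M)"
    by (intro nn_integral_cong_AE) auto
  also have "\<dots> = (\<integral>\<^sup>+ x. g x * X x \<partial>M)"
    by (rule nn_cond_exp_intg) auto
  finally show ?thesis ..
qed

lemma ncgamma_prob_nonneg:
  assumes \<delta>: "\<delta> > 0" and \<Theta>: "\<Theta> \<ge> 0"
  shows "ncgamma_prob \<delta> \<Theta> \<theta> B \<ge> 0"
proof -
  have m: "measure (gamma_measure (\<delta> + real n)) {g. \<theta> * g \<in> B} \<le> 1" for n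
    using \<delta> by (intro prob_space.prob_le_1 prob_space_gamma) auto
  have sm: "summable (\<lambda>n. pois \<Theta> n * measure (gamma_measure (\<delta> + real n)) {g. \<theta> * g \<in> B})"
  proof (rule summable_comparison_test)
    show "\<exists>N. \<forall>n\<ge>N. norm (pois \<Theta> n * measure (gamma_measure (\<delta> + real n)) {g. \<theta> * g \<in> B}) \<le> pois \<Theta> n * 1 ^ n"
      using m pois_nonneg[OF \<Theta>] by (auto intro!: mult_left_le)
    show "summable (\<lambda>n. pois \<Theta> n * 1 ^ n)" using pois_sums by (rule sums_summable)
  qed
  have "0 \<le> (\<Sum>n. pois \<Theta> n * measure (gamma_measure (\<delta> + real n)) {g. \<theta> * g \<in> B})"
    using sm pois_nonneg[OF \<Theta>] by (intro suminf_nonneg) auto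
  thus ?thesis unfolding ncgamma_prob_def pois_def by (simp add: mult_ac)
qed

lemma ncg_mono:
  assumes "\<And>x. h1 x \<le> h2 x"
  shows "ncg_int \<delta> \<theta> h1 \<Theta> \<le> ncg_int \<delta> \<theta> h2 \<Theta>"
  unfolding ncg_int_def using assms
  by (intro suminf_le mult_left_mono nn_integral_mono) auto

context lharg
begin

abbreviation "Th s \<equiv> Theta d p q \<beta> \<alpha> \<gamma> eps RV s"

lemma RV_step_set:
  assumes s: "s \<ge> t0" and A: "A \<in> sets (F s)" and h: "h \<in> borel_measurable borel"
  shows "(\<integral>\<^sup>+ \<omega>. indicator A \<omega> * h (RV (s + 1) \<omega>) \<partial>M)
       = (\<integral>\<^sup>+ \<omega>. indicator A \<omega> * ncg_int \<delta> \<theta> h (Th s \<omega>) \<partial>M)"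
  using h
proof (induction rule: borel_measurable_induct)
  case (cong f g)
  hence "f = g" by auto
  thus ?case using cong by simp
next
  case (set B)
  have AM: "A \<in> sets M" using A F_subalg[of s] by (auto simp: subalgebra_def)
  have ThF[measurable]: "Th s \<in> borel_measurable M" by (rule meas_F_M[OF Theta_F])
  have ncg_eq: "ncgamma_prob \<delta> (Th s \<omega>) \<theta> B = enn2real (ncg_int \<delta> \<theta> (indicator B) (Th s \<omega>))"
    if "\<omega> \<in> space M" for \<omega>
    using ncg_indicator[OF \<delta>_pos Theta_nonneg[OF that] set] ncgamma_prob_nonneg[OF \<delta>_pos Theta_nonneg[OF that]]
    by simp
  have mf: "(\<lambda>\<omega>. indicator A \<omega> * ncgamma_prob \<delta> (Th s \<omega>) \<theta> B) \<in> borel_measurable M"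
  proof -
    have "(\<lambda>\<omega>. indicator A \<omega> * enn2real (ncg_int \<delta> \<theta> (indicator B) (Th s \<omega>))) \<in> borel_measurable M"
      using AM by measurable
    thus ?thesis by (rule measurable_cong[THEN iffD1, rotated]) (simp add: ncg_eq)
  qed
  have nn: "(\<integral>\<^sup>+ \<omega>. ennreal (indicator A \<omega> * ncgamma_prob \<delta> (Th s \<omega>) \<theta> B) \<partial>M)
     = (\<integral>\<^sup>+ \<omega>. indicator A \<omega> * ncg_int \<delta> \<theta> (indicator B) (Th s \<omega>) \<partial>M)"
    by (intro nn_integral_cong)
       (simp add: ncg_indicator[OF \<delta>_pos Theta_nonneg set] ennreal_mult' ncgamma_prob_nonneg[OF \<delta>_pos Theta_nonneg] indicator_def)
  have fin: "(\<integral>\<^sup>+ \<omega>. indicator A \<omega> * ncg_int \<delta> \<theta> (indicator B) (Th s \<omega>) \<partial>M) \<le> 1"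
  proof -
    have "(\<integral>\<^sup>+ \<omega>. indicator A \<omega> * ncg_int \<delta> \<theta> (indicator B) (Th s \<omega>) \<partial>M) \<le> (\<integral>\<^sup>+ \<omega>. 1 \<partial>M)"
      by (intro nn_integral_mono)
         (auto simp: indicator_def intro!: ncg_le1[OF \<delta>_pos \<theta>_pos Theta_nonneg set])
    also have "\<dots> = 1" by (simp add: emeasure_space_1)
    finally show ?thesis .
  qed
  have "measure M (A \<inter> (RV (s + 1) -` B \<inter> space M))
      = (\<integral>\<omega>. indicator A \<omega> * ncgamma_prob \<delta> (Th s \<omega>) \<theta> B \<partial>M)"
    using RV_cond_law s A set by auto
  also have "\<dots> = enn2real (\<integral>\<^sup>+ \<omega>. indicator A \<omega> * ncg_int \<delta> \<theta> (indicator B) (Th s \<omega>) \<partial>M)"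
    using mf by (subst integral_eq_nn_integral)
      (auto simp: nn ncgamma_prob_nonneg[OF \<delta>_pos Theta_nonneg] intro!: AE_I2)
  finally have meq: "measure M (A \<inter> (RV (s + 1) -` B \<inter> space M)) = enn2real (\<integral>\<^sup>+ \<omega>. indicator A \<omega> * ncg_int \<delta> \<theta> (indicator B) (Th s \<omega>) \<partial>M)" .
  have "(\<integral>\<^sup>+ \<omega>. indicator A \<omega> * indicator B (RV (s + 1) \<omega>) \<partial>M) = (\<integral>\<^sup>+ \<omega>. indicator (A \<inter> (RV (s + 1) -` B \<inter> space M)) \<omega> \<partial>M)"
    by (intro nn_integral_cong) (auto simp: indicator_def)
  also have "\<dots> = emeasure M (A \<inter> (RV (s + 1) -` B \<inter> space M))"
    using sets.Int[OF AM measurable_sets[OF RV_meas' set]] by (intro nn_integral_indicator)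
  also have "\<dots> = ennreal (measure M (A \<inter> (RV (s + 1) -` B \<inter> space M)))"
    by (simp add: emeasure_eq_measure)
  also have "\<dots> = (\<integral>\<^sup>+ \<omega>. indicator A \<omega> * ncg_int \<delta> \<theta> (indicator B) (Th s \<omega>) \<partial>M)"
    unfolding meq using fin by (subst ennreal_enn2real) (auto simp: top_unique less_top[symmetric])
  finally show ?case .
next
  case (mult u c)
  have AM: "A \<in> sets M" using A F_subalg[of s] by (auto simp: subalgebra_def)
  have "(\<integral>\<^sup>+ \<omega>. indicator A \<omega> * (c * u (RV (s + 1) \<omega>)) \<partial>M) = c * (\<integral>\<^sup>+ \<omega>. indicator A \<omega> * u (RV (s + 1) \<omega>) \<partial>M)"
    using mult AM by (subst nn_integral_cmult[symmetric]) (auto simp: mult_ac)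
  also have "\<dots> = c * (\<integral>\<^sup>+ \<omega>. indicator A \<omega> * ncg_int \<delta> \<theta> u (Th s \<omega>) \<partial>M)" using mult by simp
  also have "\<dots> = (\<integral>\<^sup>+ \<omega>. indicator A \<omega> * ncg_int \<delta> \<theta> (\<lambda>x. c * u x) (Th s \<omega>) \<partial>M)"
    using mult AM meas_F_M[OF Theta_F]
    by (subst nn_integral_cmult[symmetric]) (auto simp: ncg_cmult mult_ac)
  finally show ?case .
next
  case (add u v)
  have AM: "A \<in> sets M" using A F_subalg[of s] by (auto simp: subalgebra_def)
  have vm[measurable]: "v \<in> borel_measurable borel" "u \<in> borel_measurable borel" using add by auto
  note [measurable] = meas_F_M[OF Theta_F] AM
  have m1: "(\<lambda>\<omega>. indicator A \<omega> * v (RV (s + 1) \<omega>)) \<in> borel_measurable M" by measurable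
  have m2: "(\<lambda>\<omega>. indicator A \<omega> * u (RV (s + 1) \<omega>)) \<in> borel_measurable M" by measurable
  have m3: "(\<lambda>\<omega>. indicator A \<omega> * ncg_int \<delta> \<theta> v (Th s \<omega>)) \<in> borel_measurable M" by measurable
  have m4: "(\<lambda>\<omega>. indicator A \<omega> * ncg_int \<delta> \<theta> u (Th s \<omega>)) \<in> borel_measurable M" by measurable
  have "(\<integral>\<^sup>+ \<omega>. indicator A \<omega> * (v (RV (s + 1) \<omega>) + u (RV (s + 1) \<omega>)) \<partial>M)
     = (\<integral>\<^sup>+ \<omega>. indicator A \<omega> * v (RV (s + 1) \<omega>) \<partial>M) + (\<integral>\<^sup>+ \<omega>. indicator A \<omega> * u (RV (s + 1) \<omega>) \<partial>M)"
    using m1 m2 by (subst nn_integral_add[symmetric]) (auto simp: distrib_left)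
  also have "\<dots> = (\<integral>\<^sup>+ \<omega>. indicator A \<omega> * ncg_int \<delta> \<theta> v (Th s \<omega>) \<partial>M) + (\<integral>\<^sup>+ \<omega>. indicator A \<omega> * ncg_int \<delta> \<theta> u (Th s \<omega>) \<partial>M)"
    using add by simp
  also have "\<dots> = (\<integral>\<^sup>+ \<omega>. indicator A \<omega> * ncg_int \<delta> \<theta> (\<lambda>x. v x + u x) (Th s \<omega>) \<partial>M)"
    using m3 m4 vm by (subst nn_integral_add[symmetric]) (auto simp: ncg_add distrib_left)
  finally show ?case .
next
  case (seq U)
  have AM: "A \<in> sets M" using A F_subalg[of s] by (auto simp: subalgebra_def)
  have Um[measurable]: "\<And>i. U i \<in> borel_measurable borel" using seq by auto
  have inc: "incseq U" using seq by auto
  have IH: "\<And>i. (\<integral>\<^sup>+ \<omega>. indicator A \<omega> * U i (RV (s + 1) \<omega>) \<partial>M) = (\<integral>\<^sup>+ \<omega>. indicator A \<omega> * ncg_int \<delta> \<theta> (U i) (Th s \<omega>) \<partial>M)"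
    using seq by auto
  note [measurable] = meas_F_M[OF Theta_F]
  have "(\<integral>\<^sup>+ \<omega>. indicator A \<omega> * (SUP i. U i) (RV (s + 1) \<omega>) \<partial>M)
      = (\<integral>\<^sup>+ \<omega>. (SUP i. indicator A \<omega> * U i (RV (s + 1) \<omega>)) \<partial>M)"
    by (auto simp: image_comp comp_def SUP_mult_left_ennreal intro!: nn_integral_cong)
  also have "\<dots> = (SUP i. \<integral>\<^sup>+ \<omega>. indicator A \<omega> * U i (RV (s + 1) \<omega>) \<partial>M)"
    using inc AM
    by (intro nn_integral_monotone_convergence_SUP)
       (auto simp: incseq_def le_fun_def intro!: mult_left_mono)
  also have "\<dots> = (SUP i. \<integral>\<^sup>+ \<omega>. indicator A \<omega> * ncg_int \<delta> \<theta> (U i) (Th s \<omega>) \<partial>M)"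
    using IH by simp
  also have "\<dots> = (\<integral>\<^sup>+ \<omega>. (SUP i. indicator A \<omega> * ncg_int \<delta> \<theta> (U i) (Th s \<omega>)) \<partial>M)"
    using inc AM
    by (intro nn_integral_monotone_convergence_SUP[symmetric])
       (auto simp: incseq_def le_fun_def intro!: mult_left_mono ncg_mono)
  also have "\<dots> = (\<integral>\<^sup>+ \<omega>. indicator A \<omega> * ncg_int \<delta> \<theta> (SUP i. U i) (Th s \<omega>) \<partial>M)"
    using Um inc by (simp add: ncg_SUP SUP_mult_left_ennreal)
  finally show ?case .
qed

lemma RV_step:
  assumes s: "s \<ge> t0" and m: "\<theta> * \<mu> < 1" and g[measurable]: "g \<in> borel_measurable (F s)"
  shows "(\<integral>\<^sup>+ \<omega>. g \<omega> * ennreal (exp (\<mu> * RV (s + 1) \<omega>)) \<partial>M)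
       = (\<integral>\<^sup>+ \<omega>. g \<omega> * ennreal (exp (- \<delta> * wfun \<mu> \<theta> + Th s \<omega> * vfun \<mu> \<theta>)) \<partial>M)"
proof (rule ext_cond[OF F_sfs])
  note [measurable] = Theta_F[of s]
  show "(\<lambda>\<omega>. ennreal (exp (- \<delta> * wfun \<mu> \<theta> + Th s \<omega> * vfun \<mu> \<theta>))) \<in> borel_measurable (F s)"
    by measurable
  show "(\<lambda>\<omega>. ennreal (exp (\<mu> * RV (s + 1) \<omega>))) \<in> borel_measurable M" by measurable
  fix A assume A: "A \<in> sets (F s)"
  have "(\<integral>\<^sup>+ \<omega>. indicator A \<omega> * ennreal (exp (\<mu> * RV (s + 1) \<omega>)) \<partial>M)
      = (\<integral>\<^sup>+ \<omega>. indicator A \<omega> * ncg_int \<delta> \<theta> (\<lambda>x. ennreal (exp (\<mu> * x))) (Th s \<omega>) \<partial>M)"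
    by (rule RV_step_set[OF s A]) measurable
  also have "\<dots> = (\<integral>\<^sup>+ \<omega>. indicator A \<omega> * ennreal (exp (- \<delta> * wfun \<mu> \<theta> + Th s \<omega> * vfun \<mu> \<theta>)) \<partial>M)"
    by (intro nn_integral_cong) (simp add: ncg_mgf[OF \<delta>_pos \<theta>_pos Theta_nonneg m])
  finally show "(\<integral>\<^sup>+ \<omega>. indicator A \<omega> * ennreal (exp (\<mu> * RV (s + 1) \<omega>)) \<partial>M)
      = (\<integral>\<^sup>+ \<omega>. indicator A \<omega> * ennreal (exp (- \<delta> * wfun \<mu> \<theta> + Th s \<omega> * vfun \<mu> \<theta>)) \<partial>M)" .
qed (rule g)

end

lemma gauss_pt:
  fixes c \<alpha> x :: real
  assumes c: "c < 1/2"
  defines "K \<equiv> 1 - 2 * c"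
  shows "std_normal_density x * exp (\<alpha> * x + c * x\<^sup>2)
       = (exp (\<alpha>\<^sup>2 / (2 * K)) / sqrt K) * normal_density (\<alpha> / K) (1 / sqrt K) x"
proof -
  have K: "K > 0" using c by (simp add: K_def)
  have s2: "(1 / sqrt K)\<^sup>2 = 1 / K" using K by (simp add: power_divide)
  have sq: "sqrt (2 * pi * (1 / K)) = sqrt (2 * pi) / sqrt K"
    by (simp add: real_sqrt_divide real_sqrt_mult)
  have e1: "- (x - \<alpha> / K)\<^sup>2 / (2 * (1 / K)) = - (K * x\<^sup>2 - 2 * \<alpha> * x + \<alpha>\<^sup>2 / K) / 2"
    using K by (simp add: power2_eq_square field_simps)
  have e2: "- (K * x\<^sup>2 - 2 * \<alpha> * x + \<alpha>\<^sup>2 / K) / 2 = - (K * x\<^sup>2) / 2 + \<alpha> * x - \<alpha>\<^sup>2 / (2 * K)"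
    using K by (simp add: field_simps)
  have e3: "- (K * x\<^sup>2) / 2 = - x\<^sup>2 / 2 + c * x\<^sup>2"
    by (simp add: K_def field_simps)
  have ex: "- (x - \<alpha> / K)\<^sup>2 / (2 * (1 / K)) = - x\<^sup>2 / 2 + (\<alpha> * x + c * x\<^sup>2) - \<alpha>\<^sup>2 / (2 * K)"
    unfolding e1 e2 e3 by simp
  have "normal_density (\<alpha> / K) (1 / sqrt K) x
      = sqrt K / sqrt (2 * pi) * (exp (- x\<^sup>2 / 2) * exp (\<alpha> * x + c * x\<^sup>2) / exp (\<alpha>\<^sup>2 / (2 * K)))"
  proof -
    have "normal_density (\<alpha> / K) (1 / sqrt K) x
        = 1 / (sqrt (2 * pi) / sqrt K) * exp (- x\<^sup>2 / 2 + (\<alpha> * x + c * x\<^sup>2) - \<alpha>\<^sup>2 / (2 * K))"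
      unfolding normal_density_def s2 sq ex ..
    also have "exp (- x\<^sup>2 / 2 + (\<alpha> * x + c * x\<^sup>2) - \<alpha>\<^sup>2 / (2 * K))
        = exp (- x\<^sup>2 / 2) * exp (\<alpha> * x + c * x\<^sup>2) / exp (\<alpha>\<^sup>2 / (2 * K))"
      by (simp only: exp_add exp_diff)
    also have "1 / (sqrt (2 * pi) / sqrt K) = sqrt K / sqrt (2 * pi)" by simp
    finally show ?thesis by simp
  qed
  thus ?thesis
    using K by (simp add: std_normal_density_def field_simps)
qed

lemma gauss_mgf:
  fixes c \<alpha> :: real
  assumes c: "c < 1/2"
  shows "(\<integral>\<^sup>+ x. ennreal (std_normal_density x) * ennreal (exp (\<alpha> * x + c * x\<^sup>2)) \<partial>lborel)
       = ennreal (exp (\<alpha>\<^sup>2 / (2 * (1 - 2 * c))) / sqrt (1 - 2 * c))"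
proof -
  define K where "K = 1 - 2 * c"
  have K: "K > 0" using c by (simp add: K_def)
  have one: "(\<integral>\<^sup>+ x. ennreal (normal_density (\<alpha> / K) (1 / sqrt K) x) \<partial>lborel) = 1"
  proof -
    have sK: "0 < 1 / sqrt K" using K by simp
    interpret prob_space "density lborel (\<lambda>x. ennreal (normal_density (\<alpha> / K) (1 / sqrt K) x))"
      by (rule prob_space_normal_density[OF sK])
    show ?thesis using emeasure_space_1 sK by (simp add: emeasure_density)
  qed
  have "(\<integral>\<^sup>+ x. ennreal (std_normal_density x) * ennreal (exp (\<alpha> * x + c * x\<^sup>2)) \<partial>lborel)
      = (\<integral>\<^sup>+ x. ennreal (exp (\<alpha>\<^sup>2 / (2 * K)) / sqrt K) * ennreal (normal_density (\<alpha> / K) (1 / sqrt K) x) \<partial>lborel)"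
  proof (intro nn_integral_cong)
    fix x
    have "ennreal (std_normal_density x) * ennreal (exp (\<alpha> * x + c * x\<^sup>2)) = ennreal (std_normal_density x * exp (\<alpha> * x + c * x\<^sup>2))"
      by (simp add: ennreal_mult)
    also have "\<dots> = ennreal ((exp (\<alpha>\<^sup>2 / (2 * K)) / sqrt K) * normal_density (\<alpha> / K) (1 / sqrt K) x)"
      unfolding K_def by (rule arg_cong[where f=ennreal], rule gauss_pt[OF c])
    also have "\<dots> = ennreal (exp (\<alpha>\<^sup>2 / (2 * K)) / sqrt K) * ennreal (normal_density (\<alpha> / K) (1 / sqrt K) x)"
      using K by (intro ennreal_mult') auto
    finally show "ennreal (std_normal_density x) * ennreal (exp (\<alpha> * x + c * x\<^sup>2)) = ennreal (exp (\<alpha>\<^sup>2 / (2 * K)) / sqrt K) * ennreal (normal_density (\<alpha> / K) (1 / sqrt K) x)" .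
  qed
  also have "\<dots> = ennreal (exp (\<alpha>\<^sup>2 / (2 * K)) / sqrt K)"
    by (subst nn_integral_cmult) (auto simp: one)
  finally show ?thesis unfolding K_def .
qed

context lharg
begin

lemma indep_Y_eps:
  fixes T :: "'b measure"
  assumes s: "s \<ge> t0" and Y: "Y \<in> measurable (Fp s) T" and e: "e \<in> measurable borel T"
  shows "indep_var T Y T (\<lambda>\<omega>. e (eps (s + 1) \<omega>))"
proof -
  let ?E = "{eps (s + 1) -` B \<inter> space M | B. B \<in> sets borel}"
  have ind: "indep_set ?E (sets (Fp s))" using eps_indep_past s by auto
  have YM: "Y \<in> measurable M T" by (rule measurable_from_subalg[OF Fp_subalg Y])
  have sY: "sigma_sets (space M) {Y -` A \<inter> space M | A. A \<in> sets T} \<subseteq> sets (Fp s)"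
  proof (rule sets.sigma_sets_subset[of _ "Fp s", simplified])
    show "{Y -` A \<inter> space M |A. A \<in> sets T} \<subseteq> sets (Fp s)"
      using measurable_sets[OF Y] by auto
  qed
  have Eeq: "sets (vimage_algebra (space M) (eps (s + 1)) borel) = ?E"
    by (subst sets_vimage_algebra2) auto
  have sE: "sigma_sets (space M) {(\<lambda>\<omega>. e (eps (s + 1) \<omega>)) -` A \<inter> space M | A. A \<in> sets T} \<subseteq> ?E"
  proof -
    have "sigma_sets (space (vimage_algebra (space M) (eps (s + 1)) borel)) {(\<lambda>\<omega>. e (eps (s + 1) \<omega>)) -` A \<inter> space M | A. A \<in> sets T}
        \<subseteq> sets (vimage_algebra (space M) (eps (s + 1)) borel)"
    proof (rule sets.sigma_sets_subset)
      show "{(\<lambda>\<omega>. e (eps (s + 1) \<omega>)) -` A \<inter> space M |A. A \<in> sets T} \<subseteq> sets (vimage_algebra (space M) (eps (s + 1)) borel)"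
      proof safe
        fix A assume A: "A \<in> sets T"
        have "(\<lambda>\<omega>. e (eps (s + 1) \<omega>)) -` A \<inter> space M = eps (s + 1) -` (e -` A) \<inter> space M" by auto
        moreover have "e -` A \<in> sets borel" using measurable_sets[OF e A] by simp
        ultimately show "(\<lambda>\<omega>. e (eps (s + 1) \<omega>)) -` A \<inter> space M \<in> sets (vimage_algebra (space M) (eps (s + 1)) borel)"
          unfolding Eeq by auto
      qed
    qed
    thus ?thesis unfolding Eeq by simp
  qed
  have FpM: "sets (Fp s) \<subseteq> events" using Fp_subalg[of s] by (auto simp: subalgebra_def)
  show ?thesis
    unfolding indep_var_eq
  proof (intro conjI)
    show "random_variable T Y" by (rule YM)
    show "random_variable T (\<lambda>\<omega>. e (eps (s + 1) \<omega>))" using e by measurable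
    show "indep_set (sigma_sets (space M) {Y -` A \<inter> space M |A. A \<in> sets T})
        (sigma_sets (space M) {(\<lambda>\<omega>. e (eps (s + 1) \<omega>)) -` A \<inter> space M | A. A \<in> sets T})"
      unfolding indep_sets2_eq
    proof (intro conjI ballI)
      show "sigma_sets (space M) {Y -` A \<inter> space M |A. A \<in> sets T} \<subseteq> events" using sY FpM by auto
      show "sigma_sets (space M) {(\<lambda>\<omega>. e (eps (s + 1) \<omega>)) -` A \<inter> space M | A. A \<in> sets T} \<subseteq> events"
        using sE by auto
      fix a b assume a: "a \<in> sigma_sets (space M) {Y -` A \<inter> space M |A. A \<in> sets T}"
        and b: "b \<in> sigma_sets (space M) {(\<lambda>\<omega>. e (eps (s + 1) \<omega>)) -` A \<inter> space M | A. A \<in> sets T}"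
      have aF: "a \<in> sets (Fp s)" using a sY by auto
      have bE: "b \<in> ?E" using b sE by auto
      have "prob (b \<inter> a) = prob b * prob a"
        using ind[unfolded indep_sets2_eq] aF bE by blast
      thus "prob (a \<inter> b) = prob a * prob b" by (simp add: Int_commute mult.commute)
    qed
  qed
qed

lemma eps_step:
  assumes s: "s \<ge> t0" and G[measurable]: "G \<in> borel_measurable (Fp s)"
    and K[measurable]: "(\<lambda>(x, e). K x e) \<in> borel_measurable (borel \<Otimes>\<^sub>M borel)"
  shows "(\<integral>\<^sup>+ \<omega>. G \<omega> * K (RV (s + 1) \<omega>) (eps (s + 1) \<omega>) \<partial>M)
       = (\<integral>\<^sup>+ \<omega>. G \<omega> * (\<integral>\<^sup>+ e. ennreal (std_normal_density e) * K (RV (s + 1) \<omega>) e \<partial>lborel) \<partial>M)"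
proof -
  let ?T = "borel \<Otimes>\<^sub>M borel :: (ennreal \<times> real) measure"
  define Y where "Y = (\<lambda>\<omega>. (G \<omega>, RV (s + 1) \<omega>))"
  have RVp[measurable]: "RV (s + 1) \<in> borel_measurable (Fp s)" by (rule RV_Fp)
  have YF: "Y \<in> measurable (Fp s) ?T" unfolding Y_def by measurable
  have YM[measurable]: "Y \<in> measurable M ?T" by (rule measurable_from_subalg[OF Fp_subalg YF])
  have GM[measurable]: "G \<in> borel_measurable M" by (rule measurable_from_subalg[OF Fp_subalg G])
  define e' where "e' = (\<lambda>x::real. (0::ennreal, x))"
  have e'm[measurable]: "e' \<in> measurable borel ?T" unfolding e'_def by measurable
  have iv: "indep_var ?T Y ?T (\<lambda>\<omega>. e' (eps (s + 1) \<omega>))" by (rule indep_Y_eps[OF s YF e'm])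
  have deq: "distr M ?T Y \<Otimes>\<^sub>M distr M ?T (\<lambda>\<omega>. e' (eps (s + 1) \<omega>)) = distr M (?T \<Otimes>\<^sub>M ?T) (\<lambda>x. (Y x, e' (eps (s + 1) x)))"
    using iv by (simp add: indep_var_distribution_eq)
  define H where "H = (\<lambda>(y :: ennreal \<times> real, e :: ennreal \<times> real). fst y * K (snd y) (snd e))"
  have H[measurable]: "H \<in> borel_measurable (?T \<Otimes>\<^sub>M ?T)"
  proof -
    have "(\<lambda>z :: (ennreal \<times> real) \<times> (ennreal \<times> real). K (snd (fst z)) (snd (snd z))) \<in> borel_measurable (?T \<Otimes>\<^sub>M ?T)"
      using measurable_compose[OF _ K, of "\<lambda>z :: (ennreal \<times> real) \<times> (ennreal \<times> real). (snd (fst z), snd (snd z))"]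
      by simp
    thus ?thesis unfolding H_def by (simp add: case_prod_beta')
  qed
  interpret N: prob_space "distr M ?T (\<lambda>\<omega>. e' (eps (s + 1) \<omega>))" by (rule prob_space_distr) simp
  have dens: "distr M lborel (eps (s + 1)) = density lborel std_normal_density"
    using eps_dist by (simp add: distributed_distr_eq_density)
  have "(\<integral>\<^sup>+ \<omega>. G \<omega> * K (RV (s + 1) \<omega>) (eps (s + 1) \<omega>) \<partial>M) = (\<integral>\<^sup>+ \<omega>. H (Y \<omega>, e' (eps (s + 1) \<omega>)) \<partial>M)"
    by (simp add: H_def Y_def e'_def)
  also have "\<dots> = (\<integral>\<^sup>+ z. H z \<partial>distr M (?T \<Otimes>\<^sub>M ?T) (\<lambda>x. (Y x, e' (eps (s + 1) x))))"
    by (subst nn_integral_distr) auto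
  also have "\<dots> = (\<integral>\<^sup>+ z. H z \<partial>(distr M ?T Y \<Otimes>\<^sub>M distr M ?T (\<lambda>\<omega>. e' (eps (s + 1) \<omega>))))"
    by (simp add: deq)
  also have "\<dots> = (\<integral>\<^sup>+ y. (\<integral>\<^sup>+ e. H (y, e) \<partial>distr M ?T (\<lambda>\<omega>. e' (eps (s + 1) \<omega>))) \<partial>distr M ?T Y)"
    by (subst N.nn_integral_fst[symmetric]) (auto simp: H)
  also have "\<dots> = (\<integral>\<^sup>+ \<omega>. (\<integral>\<^sup>+ e. H (Y \<omega>, e) \<partial>distr M ?T (\<lambda>\<omega>. e' (eps (s + 1) \<omega>))) \<partial>M)"
    by (subst nn_integral_distr) (auto intro!: N.borel_measurable_nn_integral_fst)
  also have "\<dots> = (\<integral>\<^sup>+ \<omega>. G \<omega> * (\<integral>\<^sup>+ e. ennreal (std_normal_density e) * K (RV (s + 1) \<omega>) e \<partial>lborel) \<partial>M)"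
  proof (intro nn_integral_cong)
    fix \<omega>
    have "(\<integral>\<^sup>+ e. H (Y \<omega>, e) \<partial>distr M ?T (\<lambda>\<omega>. e' (eps (s + 1) \<omega>))) = (\<integral>\<^sup>+ \<omega>'. H (Y \<omega>, e' (eps (s + 1) \<omega>')) \<partial>M)"
      by (subst nn_integral_distr) (auto simp: Y_def)
    also have "\<dots> = (\<integral>\<^sup>+ \<omega>'. G \<omega> * K (RV (s + 1) \<omega>) (eps (s + 1) \<omega>') \<partial>M)"
      by (simp add: H_def Y_def e'_def)
    also have "\<dots> = (\<integral>\<^sup>+ e. G \<omega> * K (RV (s + 1) \<omega>) e \<partial>distr M lborel (eps (s + 1)))"
      by (subst nn_integral_distr) auto
    also have "\<dots> = (\<integral>\<^sup>+ e. G \<omega> * K (RV (s + 1) \<omega>) e \<partial>density lborel std_normal_density)"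
      by (simp add: dens)
    also have "\<dots> = (\<integral>\<^sup>+ e. ennreal (std_normal_density e) * (G \<omega> * K (RV (s + 1) \<omega>) e) \<partial>lborel)"
      by (subst nn_integral_density) auto
    also have "\<dots> = (\<integral>\<^sup>+ e. G \<omega> * (ennreal (std_normal_density e) * K (RV (s + 1) \<omega>) e) \<partial>lborel)"
      by (simp add: mult_ac)
    also have "\<dots> = G \<omega> * (\<integral>\<^sup>+ e. ennreal (std_normal_density e) * K (RV (s + 1) \<omega>) e \<partial>lborel)"
      by (subst nn_integral_cmult) auto
    finally show "(\<integral>\<^sup>+ e. H (Y \<omega>, e) \<partial>distr M ?T (\<lambda>\<omega>. e' (eps (s + 1) \<omega>))) = G \<omega> * (\<integral>\<^sup>+ e. ennreal (std_normal_density e) * K (RV (s + 1) \<omega>) e \<partial>lborel)" .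
  qed
  finally show ?thesis .
qed

end

lemma gauss_inner:
  fixes x m a b c :: real
  assumes x: "x \<ge> 0" and c: "c < 1/2"
  shows "(\<integral>\<^sup>+ e. ennreal (std_normal_density e) * ennreal (exp (m * x + a * sqrt x * e + c * (e - b * sqrt x)\<^sup>2)) \<partial>lborel)
       = ennreal (exp ((m + c * b\<^sup>2 + (a - 2 * c * b)\<^sup>2 / (2 * (1 - 2 * c))) * x) / sqrt (1 - 2 * c))"
proof -
  define A where "A = (a - 2 * c * b) * sqrt x"
  have sx: "(sqrt x)\<^sup>2 = x" using x by simp
  have split: "exp (m * x + a * sqrt x * e + c * (e - b * sqrt x)\<^sup>2) = exp (m * x + c * b\<^sup>2 * x) * exp (A * e + c * e\<^sup>2)" for e
  proof -
    have "m * x + a * sqrt x * e + c * (e - b * sqrt x)\<^sup>2 = (m * x + c * b\<^sup>2 * (sqrt x)\<^sup>2) + (A * e + c * e\<^sup>2)"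
      unfolding A_def by (simp add: power2_eq_square algebra_simps)
    hence eq: "m * x + a * sqrt x * e + c * (e - b * sqrt x)\<^sup>2 = (m * x + c * b\<^sup>2 * x) + (A * e + c * e\<^sup>2)"
      by (simp only: sx)
    show ?thesis unfolding exp_add[symmetric] eq ..
  qed
  have "(\<integral>\<^sup>+ e. ennreal (std_normal_density e) * ennreal (exp (m * x + a * sqrt x * e + c * (e - b * sqrt x)\<^sup>2)) \<partial>lborel)
      = (\<integral>\<^sup>+ e. ennreal (exp (m * x + c * b\<^sup>2 * x)) * (ennreal (std_normal_density e) * ennreal (exp (A * e + c * e\<^sup>2))) \<partial>lborel)"
    by (intro nn_integral_cong, subst split, simp add: ennreal_mult mult_ac)
  also have "\<dots> = ennreal (exp (m * x + c * b\<^sup>2 * x)) * ennreal (exp (A\<^sup>2 / (2 * (1 - 2 * c))) / sqrt (1 - 2 * c))"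
    by (subst nn_integral_cmult) (auto simp: gauss_mgf[OF c])
  also have "\<dots> = ennreal (exp (m * x + c * b\<^sup>2 * x) * (exp (A\<^sup>2 / (2 * (1 - 2 * c))) / sqrt (1 - 2 * c)))"
    by (rule ennreal_mult'[symmetric]) simp
  also have "exp (m * x + c * b\<^sup>2 * x) * (exp (A\<^sup>2 / (2 * (1 - 2 * c))) / sqrt (1 - 2 * c))
      = exp ((m + c * b\<^sup>2 + (a - 2 * c * b)\<^sup>2 / (2 * (1 - 2 * c))) * x) / sqrt (1 - 2 * c)"
  proof -
    have "A\<^sup>2 = (a - 2 * c * b)\<^sup>2 * x" unfolding A_def by (simp add: power_mult_distrib sx)
    hence "m * x + c * b\<^sup>2 * x + A\<^sup>2 / (2 * (1 - 2 * c)) = (m + c * b\<^sup>2 + (a - 2 * c * b)\<^sup>2 / (2 * (1 - 2 * c))) * x"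
      by (simp add: algebra_simps)
    thus ?thesis by (simp add: exp_add[symmetric])
  qed
  finally show ?thesis .
qed

context lharg
begin

lemma one_step:
  assumes s: "s \<ge> t0" and c: "c < 1/2"
    and m: "\<theta> * (m + c * b\<^sup>2 + (a - 2 * c * b)\<^sup>2 / (2 * (1 - 2 * c))) < 1"
    and g[measurable]: "g \<in> borel_measurable (F s)"
  shows "(\<integral>\<^sup>+ \<omega>. g \<omega> * ennreal (exp (m * RV (s + 1) \<omega> + a * sqrt (RV (s + 1) \<omega>) * eps (s + 1) \<omega>
              + c * (eps (s + 1) \<omega> - b * sqrt (RV (s + 1) \<omega>))\<^sup>2)) \<partial>M)
       = (\<integral>\<^sup>+ \<omega>. g \<omega> * ennreal (exp (- \<delta> * wfun (m + c * b\<^sup>2 + (a - 2 * c * b)\<^sup>2 / (2 * (1 - 2 * c))) \<theta>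
              + Th s \<omega> * vfun (m + c * b\<^sup>2 + (a - 2 * c * b)\<^sup>2 / (2 * (1 - 2 * c))) \<theta>) / sqrt (1 - 2 * c)) \<partial>M)"
proof -
  define \<mu> where "\<mu> = m + c * b\<^sup>2 + (a - 2 * c * b)\<^sup>2 / (2 * (1 - 2 * c))"
  have m': "\<theta> * \<mu> < 1" using m by (simp add: \<mu>_def)
  have gM[measurable]: "g \<in> borel_measurable M" by (rule meas_F_M[OF g])
  have cpos: "0 < 1 - 2 * c" using c by simp
  have "(\<integral>\<^sup>+ \<omega>. g \<omega> * ennreal (exp (m * RV (s + 1) \<omega> + a * sqrt (RV (s + 1) \<omega>) * eps (s + 1) \<omega>
              + c * (eps (s + 1) \<omega> - b * sqrt (RV (s + 1) \<omega>))\<^sup>2)) \<partial>M)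
      = (\<integral>\<^sup>+ \<omega>. g \<omega> * (\<integral>\<^sup>+ e. ennreal (std_normal_density e) * ennreal (exp (m * RV (s + 1) \<omega> + a * sqrt (RV (s + 1) \<omega>) * e
              + c * (e - b * sqrt (RV (s + 1) \<omega>))\<^sup>2)) \<partial>lborel) \<partial>M)"
    by (rule eps_step[OF s F_Fp_meas[OF g]]) measurable
  also have "\<dots> = (\<integral>\<^sup>+ \<omega>. g \<omega> * ennreal (exp (\<mu> * RV (s + 1) \<omega>) / sqrt (1 - 2 * c)) \<partial>M)"
    by (intro nn_integral_cong) (simp add: gauss_inner[OF _ c] \<mu>_def less_imp_le RV_pos)
  also have "\<dots> = (\<integral>\<^sup>+ \<omega>. (g \<omega> * ennreal (1 / sqrt (1 - 2 * c))) * ennreal (exp (\<mu> * RV (s + 1) \<omega>)) \<partial>M)"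
    using cpos by (intro nn_integral_cong) (simp add: ennreal_mult[symmetric] mult_ac)
  also have "\<dots> = (\<integral>\<^sup>+ \<omega>. (g \<omega> * ennreal (1 / sqrt (1 - 2 * c))) * ennreal (exp (- \<delta> * wfun \<mu> \<theta> + Th s \<omega> * vfun \<mu> \<theta>)) \<partial>M)"
    by (rule RV_step[OF s m']) measurable
  also have "\<dots> = (\<integral>\<^sup>+ \<omega>. g \<omega> * ennreal (exp (- \<delta> * wfun \<mu> \<theta> + Th s \<omega> * vfun \<mu> \<theta>) / sqrt (1 - 2 * c)) \<partial>M)"
    using cpos by (intro nn_integral_cong) (simp add: ennreal_mult[symmetric] mult_ac)
  finally show ?thesis unfolding \<mu>_def .
qed

end

lemma v_alt: "1 - \<theta> * x \<noteq> 0 \<Longrightarrow> vfun x \<theta> = 1 / (1 - \<theta> * x) - 1"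
  unfolding vfun_def by (simp add: field_simps)

lemma vw_shift:
  fixes \<theta> Ys X L \<theta>s :: real
  assumes L: "L = 1 - \<theta> * Ys" "L > 0" and ts: "\<theta>s = \<theta> / L" and X: "\<theta>s * X < 1"
  shows "wfun (Ys + X) \<theta> = wfun Ys \<theta> + wfun X \<theta>s"
    and "vfun (Ys + X) \<theta> = vfun Ys \<theta> + vfun X \<theta>s / L"
proof -
  have Lts: "L * \<theta>s = \<theta>" using L ts by simp
  have a1: "L * (1 - \<theta>s * X) = L - (L * \<theta>s) * X" by (simp add: algebra_simps)
  have a2: "L - \<theta> * X = 1 - \<theta> * (Ys + X)" using L(1) by (simp add: algebra_simps)
  have e: "1 - \<theta> * (Ys + X) = L * (1 - \<theta>s * X)" using a1 a2 Lts by simp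
  have p1: "1 - \<theta>s * X > 0" using X by simp
  show "wfun (Ys + X) \<theta> = wfun Ys \<theta> + wfun X \<theta>s"
    unfolding wfun_def e using L p1 by (simp add: ln_mult L(1)[symmetric])
  show "vfun (Ys + X) \<theta> = vfun Ys \<theta> + vfun X \<theta>s / L"
  proof -
    have nz: "1 - \<theta> * (Ys + X) \<noteq> 0" unfolding e using L p1 by simp
    have v1: "vfun (Ys + X) \<theta> = 1 / (L * (1 - \<theta>s * X)) - 1"
      unfolding v_alt[OF nz] e ..
    have v2: "vfun Ys \<theta> = 1 / L - 1"
      using v_alt[of \<theta> Ys] L by simp
    have v3: "vfun X \<theta>s = 1 / (1 - \<theta>s * X) - 1"
      using v_alt[of \<theta>s X] p1 by simp
    have ar: "\<And>L a :: real. L \<noteq> 0 \<Longrightarrow> 1 - a \<noteq> 0 \<Longrightarrow> 1 / (L * (1 - a)) - 1 = (1 / L - 1) + (1 / (1 - a) - 1) / L"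
      by (simp add: field_simps)
    show ?thesis unfolding v1 v2 v3 using L p1 by (intro ar) auto
  qed
qed

lemma alg_mu:
  fixes \<nu>1 lm z B1 C1 \<gamma> :: real
  assumes C: "1 - 2 * C1 \<noteq> 0"
  shows "(- \<nu>1 - (lm + 1/2) * lm + z * lm + B1) + C1 * \<gamma>\<^sup>2
          + ((z - (lm + 1/2)) - 2 * C1 * \<gamma>)\<^sup>2 / (2 * (1 - 2 * C1))
       = (- lm\<^sup>2 / 2 - \<nu>1 + 1/8)
         + (z * (- (1/2)) + B1 + (z\<^sup>2 / 2 + (\<gamma> + lm + 1/2)\<^sup>2 * C1 - 2 * C1 * (\<gamma> + lm + 1/2) * z) / (1 - 2 * C1))"
proof -
  have C2: "2 * (1 - 2 * C1) \<noteq> 0" using C by simp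
  show ?thesis using C C2
    by (simp add: field_simps power2_eq_square)
qed

lemma sum_shift1:
  fixes h :: "nat \<Rightarrow> real" and x :: "int \<Rightarrow> real"
  assumes p: "p \<ge> 1"
  shows "(\<Sum>i=1..p. h i * x (s + 1 + 1 - int i))
       = h 1 * x (s + 1) + (\<Sum>i=1..p. (if i \<le> p - 1 then h (i + 1) else 0) * x (s + 1 - int i))"
proof -
  have "{1..p} = insert 1 {2..p}" using p by auto
  hence "(\<Sum>i=1..p. h i * x (s + 1 + 1 - int i)) = h 1 * x (s + 1) + (\<Sum>i=2..p. h i * x (s + 1 + 1 - int i))"
    by (simp add: sum.insert add_ac)
  also have "(\<Sum>i=2..p. h i * x (s + 1 + 1 - int i)) = (\<Sum>i=1..p-1. h (i + 1) * x (s + 1 - int i))"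
  proof -
    have "(\<Sum>i=2..p. h i * x (s + 1 + 1 - int i)) = (\<Sum>i=1+1..(p-1)+1. h i * x (s + 1 + 1 - int i))"
      using p by (simp add: numeral_2_eq_2)
    also have "\<dots> = (\<Sum>i=1..p-1. h (i + 1) * x (s + 1 + 1 - int (i + 1)))"
      by (rule sum.shift_bounds_cl_nat_ivl)
    finally show ?thesis by (simp add: algebra_simps)
  qed
  also have "(\<Sum>i=1..p-1. h (i + 1) * x (s + 1 - int i)) = (\<Sum>i=1..p. (if i \<le> p - 1 then h (i + 1) else 0) * x (s + 1 - int i))"
  proof -
    have "{1..p} = insert p {1..p-1}" using p by auto
    hence "(\<Sum>i=1..p. (if i \<le> p - 1 then h (i + 1) else 0) * x (s + 1 - int i))
        = (\<Sum>i=1..p-1. (if i \<le> p - 1 then h (i + 1) else 0) * x (s + 1 - int i))"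
      using p by (simp add: sum.insert)
    also have "\<dots> = (\<Sum>i=1..p-1. h (i + 1) * x (s + 1 - int i))"
      by (intro sum.cong) auto
    finally show ?thesis ..
  qed
  finally show ?thesis .
qed

lemma real_cond_exp_charact_nn:
  assumes sfs: "sigma_finite_subalgebra M F"
    and X[measurable]: "X \<in> borel_measurable M" and Xnn: "AE x in M. X x \<ge> 0"
    and Y[measurable]: "Y \<in> borel_measurable F" and Ynn: "\<And>x. Y x \<ge> 0"
    and eq: "\<And>A. A \<in> sets F \<Longrightarrow> (\<integral>\<^sup>+ x. indicator A x * ennreal (X x) \<partial>M) = (\<integral>\<^sup>+ x. indicator A x * ennreal (Y x) \<partial>M)"
  shows "AE x in M. real_cond_exp M F X x = Y x"
proof -
  interpret sigma_finite_subalgebra M F by (rule sfs)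
  have YM[measurable]: "Y \<in> borel_measurable M" by (rule measurable_from_subalg[OF subalg Y])
  have a1: "AE x in M. ennreal (Y x) = nn_cond_exp M F (\<lambda>x. ennreal (X x)) x"
  proof (rule nn_cond_exp_charact)
    fix A assume A: "A \<in> sets F"
    show "(\<integral>\<^sup>+ x\<in>A. ennreal (X x) \<partial>M) = (\<integral>\<^sup>+ x\<in>A. ennreal (Y x) \<partial>M)"
      using eq[OF A] by (simp add: mult.commute)
  qed auto
  have a2: "AE x in M. (0::ennreal) = nn_cond_exp M F (\<lambda>x. ennreal (- X x)) x"
  proof (rule nn_cond_exp_charact)
    fix A assume A: "A \<in> sets F"
    show "(\<integral>\<^sup>+ x\<in>A. ennreal (- X x) \<partial>M) = (\<integral>\<^sup>+ x\<in>A. 0 \<partial>M)"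
      using Xnn by (intro nn_integral_cong_AE) (auto simp: ennreal_neg)
  qed auto
  show ?thesis using a1 a2
  proof eventually_elim
    case (elim x)
    have "real_cond_exp M F X x = enn2real (nn_cond_exp M F (\<lambda>x. ennreal (X x)) x) - enn2real (nn_cond_exp M F (\<lambda>x. ennreal (- X x)) x)"
      by (simp add: real_cond_exp_def)
    also have "\<dots> = enn2real (ennreal (Y x)) - enn2real 0"
      unfolding elim(1)[symmetric] elim(2)[symmetric] ..
    also have "\<dots> = Y x" using Ynn by simp
    finally show ?case .
  qed
qed

locale lharg_main = lharg +
  fixes r lm \<nu>1 z :: real and T :: int
  assumes Ysc: "1 - \<theta> * (- lm\<^sup>2 / 2 - \<nu>1 + 1/8) > 0"
    and p_ge: "p \<ge> 1" and q_ge: "q \<ge> 1"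
begin

definition "Ys = - lm\<^sup>2 / 2 - \<nu>1 + 1/8"
definition "\<nu>2 = lm + 1/2"
definition "L = 1 - \<theta> * Ys"
definition "\<theta>s = \<theta> / L"
definition "cf k = coef r (- (1/2)) \<delta> \<theta>s (d / L) (\<gamma> + lm + 1/2) p q (\<lambda>i. \<beta> i / L) (\<lambda>j. \<alpha> j / L) z k"
definition "Xc k = Xcoef r (- (1/2)) \<delta> \<theta>s (d / L) (\<gamma> + lm + 1/2) p q (\<lambda>i. \<beta> i / L) (\<lambda>j. \<alpha> j / L) z k"
definition "C1 k = snd (snd (cf k)) 1"

definition "fnum s \<omega> = exp (- \<nu>1 * RV (s + 1) \<omega> - \<nu>2 * logret r lm eps RV (s + 1) \<omega>)"
definition "Dc s \<omega> = exp (- \<nu>2 * r - \<delta> * wfun Ys \<theta> + Th s \<omega> * vfun Ys \<theta>)"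
definition "Prd s \<omega> = (\<Prod>u\<in>{s..<T}. fnum u \<omega> / Dc u \<omega>) * exp (z * logret_sum r lm eps RV s T \<omega>)"
definition "Phi k s \<omega> = exp (fst (cf k) + (\<Sum>i=1..p. fst (snd (cf k)) i * RV (s + 1 - int i) \<omega>)
                                   + (\<Sum>j=1..q. snd (snd (cf k)) j * lev \<gamma> eps RV (s + 1 - int j) \<omega>))"

lemma L_pos: "L > 0" using Ysc by (simp add: L_def Ys_def)

lemma cf_Suc:
  "fst (cf (Suc k)) = fst (cf k) + z * r - ln (1 - 2 * C1 k) / 2 - \<delta> * wfun (Xc k) \<theta>s + d / L * vfun (Xc k) \<theta>s"
  "fst (snd (cf (Suc k))) = (\<lambda>i. (if i \<le> p - 1 then fst (snd (cf k)) (i + 1) else 0) + vfun (Xc k) \<theta>s * (\<beta> i / L))"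
  "snd (snd (cf (Suc k))) = (\<lambda>j. (if j \<le> q - 1 then snd (snd (cf k)) (j + 1) else 0) + vfun (Xc k) \<theta>s * (\<alpha> j / L))"
  "Xc k = z * (- (1/2)) + fst (snd (cf k)) 1 + (z\<^sup>2 / 2 + (\<gamma> + lm + 1/2)\<^sup>2 * C1 k - 2 * C1 k * (\<gamma> + lm + 1/2) * z) / (1 - 2 * C1 k)"
  unfolding cf_def Xc_def C1_def Xcoef_def by (simp_all add: Let_def case_prod_beta)

lemma cf_0: "cf 0 = (0, (\<lambda>_. 0), (\<lambda>_. 0))"
  by (simp add: cf_def)

lemma fnum_pos: "fnum s \<omega> > 0" by (simp add: fnum_def)
lemma Dc_pos: "Dc s \<omega> > 0" by (simp add: Dc_def)

lemma fnum_meas: "fnum s \<in> borel_measurable (F (s + 1))"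
proof -
  note [measurable] = RV_F[of "s + 1" "s + 1"] eps_F[of "s + 1" "s + 1"]
  show ?thesis unfolding fnum_def logret_def by measurable
qed

lemma Dc_meas: "Dc s \<in> borel_measurable (F s)"
proof -
  note [measurable] = Theta_F[of s]
  show ?thesis unfolding Dc_def by measurable
qed

lemma D_ae:
  assumes s: "s \<ge> t0"
  shows "AE \<omega> in M. real_cond_exp M (F s) (fnum s) \<omega> = Dc s \<omega>"
proof (rule real_cond_exp_charact_nn[OF F_sfs])
  show "fnum s \<in> borel_measurable M" by (rule meas_F_M[OF fnum_meas])
  show "Dc s \<in> borel_measurable (F s)" by (rule Dc_meas)
  show "AE x in M. 0 \<le> fnum s x" by (simp add: less_imp_le fnum_pos)
  show "\<And>x. 0 \<le> Dc s x" by (simp add: less_imp_le Dc_pos)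
  fix A assume A: "A \<in> sets (F s)"
  have AM: "A \<in> sets M" using A F_subalg[of s] by (auto simp: subalgebra_def)
  define m where "m = - \<nu>1 - \<nu>2 * lm"
  define a where "a = - \<nu>2"
  have mu: "m + 0 * 0\<^sup>2 + (a - 2 * 0 * 0)\<^sup>2 / (2 * (1 - 2 * 0)) = Ys"
    by (simp add: m_def a_def \<nu>2_def Ys_def power2_eq_square algebra_simps)
  have g[measurable]: "(\<lambda>\<omega>. indicator A \<omega> * ennreal (exp (- \<nu>2 * r))) \<in> borel_measurable (F s)"
    using A by measurable
  have "(\<integral>\<^sup>+ \<omega>. indicator A \<omega> * ennreal (fnum s \<omega>) \<partial>M)
     = (\<integral>\<^sup>+ \<omega>. (indicator A \<omega> * ennreal (exp (- \<nu>2 * r))) * ennreal (exp (m * RV (s + 1) \<omega> + a * sqrt (RV (s + 1) \<omega>) * eps (s + 1) \<omega>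
              + 0 * (eps (s + 1) \<omega> - 0 * sqrt (RV (s + 1) \<omega>))\<^sup>2)) \<partial>M)"
  proof (intro nn_integral_cong)
    fix \<omega>
    have "fnum s \<omega> = exp (- \<nu>2 * r) * exp (m * RV (s + 1) \<omega> + a * sqrt (RV (s + 1) \<omega>) * eps (s + 1) \<omega>
              + 0 * (eps (s + 1) \<omega> - 0 * sqrt (RV (s + 1) \<omega>))\<^sup>2)"
      unfolding fnum_def logret_def m_def a_def exp_add[symmetric] by (simp add: algebra_simps)
    thus "indicator A \<omega> * ennreal (fnum s \<omega>) = (indicator A \<omega> * ennreal (exp (- \<nu>2 * r))) * ennreal (exp (m * RV (s + 1) \<omega> + a * sqrt (RV (s + 1) \<omega>) * eps (s + 1) \<omega>
              + 0 * (eps (s + 1) \<omega> - 0 * sqrt (RV (s + 1) \<omega>))\<^sup>2))"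
      by (simp add: ennreal_mult mult_ac)
  qed
  also have "\<dots> = (\<integral>\<^sup>+ \<omega>. (indicator A \<omega> * ennreal (exp (- \<nu>2 * r))) * ennreal (exp (- \<delta> * wfun (m + 0 * 0\<^sup>2 + (a - 2 * 0 * 0)\<^sup>2 / (2 * (1 - 2 * 0))) \<theta>
              + Th s \<omega> * vfun (m + 0 * 0\<^sup>2 + (a - 2 * 0 * 0)\<^sup>2 / (2 * (1 - 2 * 0))) \<theta>) / sqrt (1 - 2 * 0)) \<partial>M)"
  proof (rule one_step[OF s _ _ g])
    show "(0::real) < 1/2" by simp
    show "\<theta> * (m + 0 * 0\<^sup>2 + (a - 2 * 0 * 0)\<^sup>2 / (2 * (1 - 2 * 0))) < 1"
      unfolding mu using Ysc by (simp add: Ys_def)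
  qed
  also have "\<dots> = (\<integral>\<^sup>+ \<omega>. indicator A \<omega> * ennreal (Dc s \<omega>) \<partial>M)"
    unfolding mu
  proof (intro nn_integral_cong)
    fix \<omega>
    have "exp (- \<nu>2 * r) * (exp (- \<delta> * wfun Ys \<theta> + Th s \<omega> * vfun Ys \<theta>) / sqrt (1 - 2 * 0)) = Dc s \<omega>"
      unfolding Dc_def by (simp add: exp_add[symmetric] algebra_simps)
    thus "indicator A \<omega> * ennreal (exp (- \<nu>2 * r)) * ennreal (exp (- \<delta> * wfun Ys \<theta> + Th s \<omega> * vfun Ys \<theta>) / sqrt (1 - 2 * 0))
        = indicator A \<omega> * ennreal (Dc s \<omega>)"
      by (simp add: ennreal_mult[symmetric] mult.assoc)
  qed
  finally show "(\<integral>\<^sup>+ \<omega>. indicator A \<omega> * ennreal (fnum s \<omega>) \<partial>M) = (\<integral>\<^sup>+ \<omega>. indicator A \<omega> * ennreal (Dc s \<omega>) \<partial>M)" .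
qed

end

context lharg_main
begin

definition "Sbr k s \<omega> = (\<Sum>i=1..p. (if i \<le> p - 1 then fst (snd (cf k)) (i + 1) else 0) * RV (s + 1 - int i) \<omega>)"
definition "Scr k s \<omega> = (\<Sum>j=1..q. (if j \<le> q - 1 then snd (snd (cf k)) (j + 1) else 0) * lev \<gamma> eps RV (s + 1 - int j) \<omega>)"
definition "mk k = - \<nu>1 - \<nu>2 * lm + z * lm + fst (snd (cf k)) 1"
definition "Rk k s \<omega> = exp ((z - \<nu>2) * r + fst (cf k) + Sbr k s \<omega> + Scr k s \<omega>) / Dc s \<omega>"

lemma alg_i:
  "fnum s \<omega> / Dc s \<omega> * exp (z * logret r lm eps RV (s + 1) \<omega>) * Phi k (s + 1) \<omega>
   = Rk k s \<omega> * exp (mk k * RV (s + 1) \<omega> + (z - \<nu>2) * sqrt (RV (s + 1) \<omega>) * eps (s + 1) \<omega>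
        + C1 k * (eps (s + 1) \<omega> - \<gamma> * sqrt (RV (s + 1) \<omega>))\<^sup>2)"
proof -
  have s1: "(\<Sum>i=1..p. fst (snd (cf k)) i * RV (s + 1 + 1 - int i) \<omega>)
      = fst (snd (cf k)) 1 * RV (s + 1) \<omega> + Sbr k s \<omega>"
    unfolding Sbr_def using sum_shift1[OF p_ge, of "fst (snd (cf k))" "\<lambda>u. RV u \<omega>" s] by simp
  have s2: "(\<Sum>j=1..q. snd (snd (cf k)) j * lev \<gamma> eps RV (s + 1 + 1 - int j) \<omega>)
      = C1 k * lev \<gamma> eps RV (s + 1) \<omega> + Scr k s \<omega>"
    unfolding Scr_def C1_def using sum_shift1[OF q_ge, of "snd (snd (cf k))" "\<lambda>u. lev \<gamma> eps RV u \<omega>" s] by simp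
  have ph: "Phi k (s + 1) \<omega> = exp (fst (cf k) + (fst (snd (cf k)) 1 * RV (s + 1) \<omega> + Sbr k s \<omega>)
        + (C1 k * lev \<gamma> eps RV (s + 1) \<omega> + Scr k s \<omega>))"
    unfolding Phi_def s1[symmetric] s2[symmetric] by (simp add: add_ac)
  have ex: "(- \<nu>1 * RV (s + 1) \<omega> - \<nu>2 * logret r lm eps RV (s + 1) \<omega>) + z * logret r lm eps RV (s + 1) \<omega>
        + (fst (cf k) + (fst (snd (cf k)) 1 * RV (s + 1) \<omega> + Sbr k s \<omega>) + (C1 k * lev \<gamma> eps RV (s + 1) \<omega> + Scr k s \<omega>))
      = ((z - \<nu>2) * r + fst (cf k) + Sbr k s \<omega> + Scr k s \<omega>)
        + (mk k * RV (s + 1) \<omega> + (z - \<nu>2) * sqrt (RV (s + 1) \<omega>) * eps (s + 1) \<omega>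
        + C1 k * (eps (s + 1) \<omega> - \<gamma> * sqrt (RV (s + 1) \<omega>))\<^sup>2)"
    unfolding logret_def lev_def mk_def by (simp add: algebra_simps)
  show ?thesis
    unfolding Rk_def fnum_def ph
    by (simp add: exp_add[symmetric] ex[symmetric] del: exp_add)
qed

lemma sum_lin:
  fixes h b :: "nat \<Rightarrow> real" and x :: "nat \<Rightarrow> real"
  shows "(\<Sum>i\<in>I. (h i + v * (b i / L)) * x i) = (\<Sum>i\<in>I. h i * x i) + (v / L) * (\<Sum>i\<in>I. b i * x i)"
  by (simp add: sum.distrib sum_distrib_left algebra_simps)

lemma sqrt_exp: "y > 0 \<Longrightarrow> sqrt y = exp (ln y / 2)"
  by (simp add: powr_half_sqrt[symmetric] powr_def)

definition "muk k = mk k + C1 k * \<gamma>\<^sup>2 + ((z - \<nu>2) - 2 * C1 k * \<gamma>)\<^sup>2 / (2 * (1 - 2 * C1 k))"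

lemma muk_eq: "1 - 2 * C1 k > 0 \<Longrightarrow> muk k = Ys + Xc k"
  unfolding muk_def mk_def \<nu>2_def Ys_def cf_Suc(4) C1_def
  by (rule alg_mu[unfolded C1_def]) simp

lemma alg_ii:
  assumes C: "1 - 2 * C1 k > 0" and X: "\<theta>s * Xc k < 1"
  shows "Rk k s \<omega> * (exp (- \<delta> * wfun (muk k) \<theta> + Th s \<omega> * vfun (muk k) \<theta>) / sqrt (1 - 2 * C1 k))
       = Phi (Suc k) s \<omega>"
proof -
  have Lp: "L > 0" by (rule L_pos)
  note vw = vw_shift[OF L_def Lp \<theta>s_def X]
  define wX where "wX = wfun (Xc k) \<theta>s"
  define vX where "vX = vfun (Xc k) \<theta>s"
  define SB where "SB = (\<Sum>i=1..p. \<beta> i * RV (s + 1 - int i) \<omega>)"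
  define SA where "SA = (\<Sum>j=1..q. \<alpha> j * lev \<gamma> eps RV (s + 1 - int j) \<omega>)"
  have Th: "Th s \<omega> = d + SB + SA" unfolding Theta_def SB_def SA_def ..
  have w: "wfun (muk k) \<theta> = wfun Ys \<theta> + wX" unfolding muk_eq[OF C] wX_def by (rule vw(1))
  have v: "vfun (muk k) \<theta> = vfun Ys \<theta> + vX / L" unfolding muk_eq[OF C] vX_def by (rule vw(2))
  have sq: "sqrt (1 - 2 * C1 k) = exp (ln (1 - 2 * C1 k) / 2)" by (rule sqrt_exp[OF C])
  have phi: "Phi (Suc k) s \<omega> = exp (fst (cf k) + z * r - ln (1 - 2 * C1 k) / 2 - \<delta> * wX + d / L * vX
       + (Sbr k s \<omega> + (vX / L) * SB) + (Scr k s \<omega> + (vX / L) * SA))"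
    unfolding Phi_def cf_Suc(1,2,3) sum_lin Sbr_def Scr_def SB_def SA_def wX_def vX_def ..
  have ex: "((z - \<nu>2) * r + fst (cf k) + Sbr k s \<omega> + Scr k s \<omega>) - (- \<nu>2 * r - \<delta> * wfun Ys \<theta> + (d + SB + SA) * vfun Ys \<theta>)
      + (- \<delta> * (wfun Ys \<theta> + wX) + (d + SB + SA) * (vfun Ys \<theta> + vX / L)) - ln (1 - 2 * C1 k) / 2
      = fst (cf k) + z * r - ln (1 - 2 * C1 k) / 2 - \<delta> * wX + d / L * vX
       + (Sbr k s \<omega> + (vX / L) * SB) + (Scr k s \<omega> + (vX / L) * SA)"
    by (simp add: algebra_simps add_divide_distrib)
  show ?thesis
    unfolding Rk_def Dc_def Th w v sq phi ex[symmetric]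
    by (simp add: exp_diff exp_add mult_ac)
qed

end

context lharg_main
begin

lemma Rk_meas: "Rk k s \<in> borel_measurable (F s)"
proof -
  have [measurable]: "RV (s + 1 - int i) \<in> borel_measurable (F s)" if "i \<in> {1..p}" for i
    using that by (intro RV_F) auto
  have [measurable]: "lev \<gamma> eps RV (s + 1 - int j) \<in> borel_measurable (F s)" if "j \<in> {1..q}" for j
    using that by (intro lev_F) auto
  have [measurable]: "Sbr k s \<in> borel_measurable (F s)" unfolding Sbr_def
    by (intro borel_measurable_sum borel_measurable_times borel_measurable_const) (auto simp del: of_nat_Suc)
  have [measurable]: "Scr k s \<in> borel_measurable (F s)" unfolding Scr_def
    by (intro borel_measurable_sum borel_measurable_times borel_measurable_const) (auto simp del: of_nat_Suc)
  note [measurable] = Dc_meas[of s]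
  show ?thesis unfolding Rk_def by measurable
qed

lemma Prd_step:
  assumes "s < T"
  shows "Prd s \<omega> = fnum s \<omega> / Dc s \<omega> * exp (z * logret r lm eps RV (s + 1) \<omega>) * Prd (s + 1) \<omega>"
proof -
  have i1: "{s..<T} = insert s {s + 1..<T}" using assms by auto
  have i2: "{s + 1..T} = insert (s + 1) {s + 1 + 1..T}" using assms by auto
  have "logret_sum r lm eps RV s T \<omega> = logret r lm eps RV (s + 1) \<omega> + logret_sum r lm eps RV (s + 1) T \<omega>"
    unfolding logret_sum_def i2 by (simp add: sum.insert)
  thus ?thesis unfolding Prd_def i1 by (simp add: prod.insert distrib_left exp_add mult_ac)
qed

lemma Prd_nonneg: "Prd s \<omega> \<ge> 0"
  unfolding Prd_def by (intro mult_nonneg_nonneg prod_nonneg) (auto simp: less_imp_le fnum_pos Dc_pos)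

lemma main_ind:
  assumes "T - int k \<ge> t0" "\<forall>j<k. 1 - 2 * C1 j > 0 \<and> \<theta>s * Xc j < 1" "g \<in> borel_measurable (F (T - int k))"
  shows "(\<integral>\<^sup>+ \<omega>. g \<omega> * ennreal (Prd (T - int k) \<omega>) \<partial>M) = (\<integral>\<^sup>+ \<omega>. g \<omega> * ennreal (Phi k (T - int k) \<omega>) \<partial>M)"
  using assms
proof (induction k arbitrary: g)
  case 0
  have "Prd T \<omega> = 1" for \<omega> by (simp add: Prd_def logret_sum_def)
  moreover have "Phi 0 T \<omega> = 1" for \<omega> by (simp add: Phi_def cf_0)
  ultimately show ?case by simp
next
  case (Suc k g)
  define s where "s = T - int (Suc k)"
  have s1: "s + 1 = T - int k" by (simp add: s_def)
  have st0: "t0 \<le> s" using Suc.prems(1) by (simp add: s_def)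
  have sT: "s < T" by (simp add: s_def)
  have C: "1 - 2 * C1 k > 0" and X: "\<theta>s * Xc k < 1" using Suc.prems(2) by auto
  have g[measurable]: "g \<in> borel_measurable (F s)" using Suc.prems(3) by (simp add: s_def)
  have gM[measurable]: "g \<in> borel_measurable M" by (rule meas_F_M[OF g])
  have IH: "\<And>g. g \<in> borel_measurable (F (s + 1)) \<Longrightarrow>
      (\<integral>\<^sup>+ \<omega>. g \<omega> * ennreal (Prd (s + 1) \<omega>) \<partial>M) = (\<integral>\<^sup>+ \<omega>. g \<omega> * ennreal (Phi k (s + 1) \<omega>) \<partial>M)"
    unfolding s1 using Suc.prems(1,2) by (intro Suc.IH) (auto simp: s_def)
  have g'[measurable]: "(\<lambda>\<omega>. g \<omega> * ennreal (fnum s \<omega> / Dc s \<omega> * exp (z * logret r lm eps RV (s + 1) \<omega>))) \<in> borel_measurable (F (s + 1))"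
  proof -
    note [measurable] = meas_F_mono[OF g, of "s + 1"] fnum_meas[of s] meas_F_mono[OF Dc_meas[of s], of "s + 1"]
      RV_F[of "s + 1" "s + 1"] eps_F[of "s + 1" "s + 1"]
    show ?thesis unfolding logret_def by measurable
  qed
  have gR[measurable]: "(\<lambda>\<omega>. g \<omega> * ennreal (Rk k s \<omega>)) \<in> borel_measurable (F s)"
    using Rk_meas[of k s] by measurable
  have mu_ok: "\<theta> * (mk k + C1 k * \<gamma>\<^sup>2 + ((z - \<nu>2) - 2 * C1 k * \<gamma>)\<^sup>2 / (2 * (1 - 2 * C1 k))) < 1"
  proof -
    have "\<theta> * Xc k < L" using X L_pos by (simp add: \<theta>s_def field_simps)
    thus ?thesis using muk_eq[OF C] unfolding muk_def L_def by (simp add: algebra_simps)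
  qed
  have "(\<integral>\<^sup>+ \<omega>. g \<omega> * ennreal (Prd s \<omega>) \<partial>M)
      = (\<integral>\<^sup>+ \<omega>. (g \<omega> * ennreal (fnum s \<omega> / Dc s \<omega> * exp (z * logret r lm eps RV (s + 1) \<omega>))) * ennreal (Prd (s + 1) \<omega>) \<partial>M)"
  proof (intro nn_integral_cong)
    fix \<omega>
    have "ennreal (Prd s \<omega>) = ennreal (fnum s \<omega> / Dc s \<omega> * exp (z * logret r lm eps RV (s + 1) \<omega>)) * ennreal (Prd (s + 1) \<omega>)"
      unfolding Prd_step[OF sT] by (rule ennreal_mult) (auto simp: less_imp_le fnum_pos Dc_pos Prd_nonneg)
    thus "g \<omega> * ennreal (Prd s \<omega>) = g \<omega> * ennreal (fnum s \<omega> / Dc s \<omega> * exp (z * logret r lm eps RV (s + 1) \<omega>)) * ennreal (Prd (s + 1) \<omega>)"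
      by (simp add: mult.assoc)
  qed
  also have "\<dots> = (\<integral>\<^sup>+ \<omega>. (g \<omega> * ennreal (fnum s \<omega> / Dc s \<omega> * exp (z * logret r lm eps RV (s + 1) \<omega>))) * ennreal (Phi k (s + 1) \<omega>) \<partial>M)"
    by (rule IH[OF g'])
  also have "\<dots> = (\<integral>\<^sup>+ \<omega>. (g \<omega> * ennreal (Rk k s \<omega>)) * ennreal (exp (mk k * RV (s + 1) \<omega> + (z - \<nu>2) * sqrt (RV (s + 1) \<omega>) * eps (s + 1) \<omega>
        + C1 k * (eps (s + 1) \<omega> - \<gamma> * sqrt (RV (s + 1) \<omega>))\<^sup>2)) \<partial>M)"
  proof (intro nn_integral_cong)
    fix \<omega>
    have "ennreal (fnum s \<omega> / Dc s \<omega> * exp (z * logret r lm eps RV (s + 1) \<omega>)) * ennreal (Phi k (s + 1) \<omega>)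
        = ennreal (fnum s \<omega> / Dc s \<omega> * exp (z * logret r lm eps RV (s + 1) \<omega>) * Phi k (s + 1) \<omega>)"
      by (rule ennreal_mult[symmetric]) (auto simp: less_imp_le fnum_pos Dc_pos Phi_def)
    also have "\<dots> = ennreal (Rk k s \<omega>) * ennreal (exp (mk k * RV (s + 1) \<omega> + (z - \<nu>2) * sqrt (RV (s + 1) \<omega>) * eps (s + 1) \<omega>
        + C1 k * (eps (s + 1) \<omega> - \<gamma> * sqrt (RV (s + 1) \<omega>))\<^sup>2))"
      unfolding alg_i by (rule ennreal_mult) (auto simp: Rk_def less_imp_le Dc_pos)
    finally show "g \<omega> * ennreal (fnum s \<omega> / Dc s \<omega> * exp (z * logret r lm eps RV (s + 1) \<omega>)) * ennreal (Phi k (s + 1) \<omega>)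
        = g \<omega> * ennreal (Rk k s \<omega>) * ennreal (exp (mk k * RV (s + 1) \<omega> + (z - \<nu>2) * sqrt (RV (s + 1) \<omega>) * eps (s + 1) \<omega>
        + C1 k * (eps (s + 1) \<omega> - \<gamma> * sqrt (RV (s + 1) \<omega>))\<^sup>2))"
      by (simp add: mult.assoc)
  qed
  also have "\<dots> = (\<integral>\<^sup>+ \<omega>. (g \<omega> * ennreal (Rk k s \<omega>)) * ennreal (exp (- \<delta> * wfun (mk k + C1 k * \<gamma>\<^sup>2 + ((z - \<nu>2) - 2 * C1 k * \<gamma>)\<^sup>2 / (2 * (1 - 2 * C1 k))) \<theta>
              + Th s \<omega> * vfun (mk k + C1 k * \<gamma>\<^sup>2 + ((z - \<nu>2) - 2 * C1 k * \<gamma>)\<^sup>2 / (2 * (1 - 2 * C1 k))) \<theta>) / sqrt (1 - 2 * C1 k)) \<partial>M)"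
    by (rule one_step[OF st0 _ mu_ok gR]) (use C in simp)
  also have "\<dots> = (\<integral>\<^sup>+ \<omega>. g \<omega> * ennreal (Phi (Suc k) s \<omega>) \<partial>M)"
  proof (intro nn_integral_cong)
    fix \<omega>
    have "ennreal (Rk k s \<omega>) * ennreal (exp (- \<delta> * wfun (muk k) \<theta> + Th s \<omega> * vfun (muk k) \<theta>) / sqrt (1 - 2 * C1 k))
        = ennreal (Phi (Suc k) s \<omega>)"
      unfolding alg_ii[OF C X, symmetric] by (rule ennreal_mult[symmetric]) (use C in \<open>auto simp: Rk_def less_imp_le Dc_pos\<close>)
    thus "g \<omega> * ennreal (Rk k s \<omega>) * ennreal (exp (- \<delta> * wfun (mk k + C1 k * \<gamma>\<^sup>2 + ((z - \<nu>2) - 2 * C1 k * \<gamma>)\<^sup>2 / (2 * (1 - 2 * C1 k))) \<theta>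
              + Th s \<omega> * vfun (mk k + C1 k * \<gamma>\<^sup>2 + ((z - \<nu>2) - 2 * C1 k * \<gamma>)\<^sup>2 / (2 * (1 - 2 * C1 k))) \<theta>) / sqrt (1 - 2 * C1 k))
        = g \<omega> * ennreal (Phi (Suc k) s \<omega>)"
      by (simp add: muk_def mult.assoc)
  qed
  finally show ?case by (simp add: s_def)
qed

end

context lharg_main
begin

lemma Phi_meas: "Phi k s \<in> borel_measurable (F s)"
proof -
  have [measurable]: "RV (s + 1 - int i) \<in> borel_measurable (F s)" if "i \<in> {1..p}" for i
    using that by (intro RV_F) auto
  have [measurable]: "lev \<gamma> eps RV (s + 1 - int j) \<in> borel_measurable (F s)" if "j \<in> {1..q}" for j
    using that by (intro lev_F) auto
  have [measurable]: "(\<lambda>\<omega>. \<Sum>i=1..p. fst (snd (cf k)) i * RV (s + 1 - int i) \<omega>) \<in> borel_measurable (F s)"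
    by (intro borel_measurable_sum borel_measurable_times borel_measurable_const) (auto simp del: of_nat_Suc)
  have [measurable]: "(\<lambda>\<omega>. \<Sum>j=1..q. snd (snd (cf k)) j * lev \<gamma> eps RV (s + 1 - int j) \<omega>) \<in> borel_measurable (F s)"
    by (intro borel_measurable_sum borel_measurable_times borel_measurable_const) (auto simp del: of_nat_Suc)
  show ?thesis unfolding Phi_def by measurable
qed

end

theorem corollary3:
  fixes M :: "'a measure" and eps RV :: "int \<Rightarrow> 'a \<Rightarrow> real"
    and r lm \<delta> \<theta> d \<gamma> \<nu>1 \<nu>2 z :: real and p q :: nat and \<beta> \<alpha> :: "nat \<Rightarrow> real"
    and t0 t T :: int
  assumes P: "prob_space M"
    and eps_dist: "\<forall>u. distributed M lborel (eps u) std_normal_density"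
    and eps_iid: "prob_space.indep_vars M (\<lambda>_. borel) eps UNIV"
    and RV_meas: "\<forall>u. RV u \<in> borel_measurable M"
    and RV_pos: "\<forall>u. \<forall>\<omega>\<in>space M. RV u \<omega> > 0"
    and \<delta>_pos: "\<delta> > 0" and \<theta>_pos: "\<theta> > 0" and d_nonneg: "d \<ge> 0"
    and p_ge: "p \<ge> 1" and q_ge: "q \<ge> 1"
    and \<beta>_nonneg: "\<forall>i. \<beta> i \<ge> 0" and \<alpha>_nonneg: "\<forall>j. \<alpha> j \<ge> 0"
    and eps_indep_past: "\<forall>s\<ge>t0. prob_space.indep_set M
            {eps (s + 1) -` B \<inter> space M | B. B \<in> sets borel} (sets (filt_plus M eps RV s))"
    and RV_cond_law: "\<forall>s\<ge>t0. \<forall>A\<in>sets (filt M eps RV s). \<forall>B\<in>sets (borel :: real measure).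
            measure M (A \<inter> (RV (s + 1) -` B \<inter> space M)) =
            (\<integral>\<omega>. indicator A \<omega> * ncgamma_prob \<delta> (Theta d p q \<beta> \<alpha> \<gamma> eps RV s \<omega>) \<theta> B \<partial>M)"
    and \<nu>2_eq: "\<nu>2 = lm + 1/2"
  defines "Ys \<equiv> - lm\<^sup>2 / 2 - \<nu>1 + 1/8"
  assumes Ys_cond: "1 - \<theta> * Ys > 0"
  defines "\<beta>s \<equiv> (\<lambda>i. \<beta> i / (1 - \<theta> * Ys))"
    and "\<alpha>s \<equiv> (\<lambda>j. \<alpha> j / (1 - \<theta> * Ys))"
    and "\<theta>s \<equiv> \<theta> / (1 - \<theta> * Ys)"
    and "ds \<equiv> d / (1 - \<theta> * Ys)"
    and "\<delta>s \<equiv> \<delta>"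
    and "\<gamma>s \<equiv> \<gamma> + lm + 1/2"
    and "lms \<equiv> - (1/2 :: real)"
    and "epss \<equiv> (\<lambda>u \<omega>. eps u \<omega> + (lm + 1/2) * sqrt (RV u \<omega>))"
  assumes t_ge: "t0 \<le> t" and tT: "t \<le> T"
    and recursion_ok: "\<forall>k < nat (T - t).
            1 - 2 * snd (snd (coef r lms \<delta>s \<theta>s ds \<gamma>s p q \<beta>s \<alpha>s z k)) 1 > 0 \<and>
            \<theta>s * Xcoef r lms \<delta>s \<theta>s ds \<gamma>s p q \<beta>s \<alpha>s z k < 1"
  shows "AE \<omega> in M.
     Q_cond_exp M r lm \<nu>1 \<nu>2 eps RV t T (\<lambda>\<omega>. exp (z * logret_sum r lm eps RV t T \<omega>)) \<omega> =
     exp (fst (coef r lms \<delta>s \<theta>s ds \<gamma>s p q \<beta>s \<alpha>s z (nat (T - t)))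
          + (\<Sum>i=1..p. fst (snd (coef r lms \<delta>s \<theta>s ds \<gamma>s p q \<beta>s \<alpha>s z (nat (T - t)))) i
                        * RV (t + 1 - int i) \<omega>)
          + (\<Sum>j=1..q. snd (snd (coef r lms \<delta>s \<theta>s ds \<gamma>s p q \<beta>s \<alpha>s z (nat (T - t)))) j
                        * lev \<gamma>s epss RV (t + 1 - int j) \<omega>))"
proof -
  have Ysd: "Ys = - lm\<^sup>2 / 2 - \<nu>1 + 1/8" by (simp add: \<open>Ys \<equiv> - lm\<^sup>2 / 2 - \<nu>1 + 1/8\<close>)
  have lh: "lharg M eps RV \<delta> \<theta> d \<gamma> p q \<beta> \<alpha> t0"
    by (rule lharg.intro[OF P eps_dist RV_meas RV_pos \<delta>_pos \<theta>_pos d_nonneg \<beta>_nonneg \<alpha>_nonneg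
        eps_indep_past RV_cond_law])
  have ysc: "1 - \<theta> * (- lm\<^sup>2 / 2 - \<nu>1 + 1/8) > 0" using Ys_cond unfolding Ysd .
  interpret LM: lharg_main M eps RV \<delta> \<theta> d \<gamma> p q \<beta> \<alpha> t0 r lm \<nu>1 z T
    by (rule lharg_main.intro[OF lh lharg_main_axioms.intro[OF ysc p_ge q_ge]])
  define k where "k = nat (T - t)"
  have tk: "T - int k = t" using tT by (simp add: k_def)
  have LMYs: "LM.Ys = Ys" by (simp add: LM.Ys_def Ysd)
  have LML: "LM.L = 1 - \<theta> * Ys" by (simp add: LM.L_def LMYs)
  have cfeq: "coef r lms \<delta>s \<theta>s ds \<gamma>s p q \<beta>s \<alpha>s z j = LM.cf j" for j
    unfolding LM.cf_def LM.\<theta>s_def LML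
    by (simp add: \<open>\<beta>s \<equiv> (\<lambda>i. \<beta> i / (1 - \<theta> * Ys))\<close> \<open>\<alpha>s \<equiv> (\<lambda>j. \<alpha> j / (1 - \<theta> * Ys))\<close>
       \<open>\<theta>s \<equiv> \<theta> / (1 - \<theta> * Ys)\<close> \<open>ds \<equiv> d / (1 - \<theta> * Ys)\<close> \<open>\<delta>s \<equiv> \<delta>\<close> \<open>\<gamma>s \<equiv> \<gamma> + lm + 1/2\<close>
       \<open>lms \<equiv> - (1/2 :: real)\<close>)
  have Xeq: "Xcoef r lms \<delta>s \<theta>s ds \<gamma>s p q \<beta>s \<alpha>s z j = LM.Xc j" for j
    unfolding LM.Xc_def LM.\<theta>s_def LML
    by (simp add: \<open>\<beta>s \<equiv> (\<lambda>i. \<beta> i / (1 - \<theta> * Ys))\<close> \<open>\<alpha>s \<equiv> (\<lambda>j. \<alpha> j / (1 - \<theta> * Ys))\<close>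
       \<open>\<theta>s \<equiv> \<theta> / (1 - \<theta> * Ys)\<close> \<open>ds \<equiv> d / (1 - \<theta> * Ys)\<close> \<open>\<delta>s \<equiv> \<delta>\<close> \<open>\<gamma>s \<equiv> \<gamma> + lm + 1/2\<close>
       \<open>lms \<equiv> - (1/2 :: real)\<close>)
  have thseq: "\<theta>s = LM.\<theta>s" by (simp add: LM.\<theta>s_def LML \<open>\<theta>s \<equiv> \<theta> / (1 - \<theta> * Ys)\<close>)
  have conds: "\<forall>j<k. 1 - 2 * LM.C1 j > 0 \<and> LM.\<theta>s * LM.Xc j < 1"
  proof -
    have rk: "\<forall>k < nat (T - t). 1 - 2 * snd (snd (LM.cf k)) 1 > 0 \<and> \<theta>s * LM.Xc k < 1"
      using recursion_ok unfolding cfeq Xeq .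
    show ?thesis using rk unfolding k_def LM.C1_def thseq by blast
  qed
  have fnum_eq: "(\<lambda>\<omega>'. exp (- \<nu>1 * RV (s + 1) \<omega>' - \<nu>2 * logret r lm eps RV (s + 1) \<omega>')) = LM.fnum s" for s
    by (simp add: LM.fnum_def LM.\<nu>2_def \<nu>2_eq fun_eq_iff)
  have sdf_eq: "sdf M r lm \<nu>1 \<nu>2 eps RV s \<omega> = LM.fnum s \<omega> / real_cond_exp M (filt M eps RV s) (LM.fnum s) \<omega>" for s \<omega>
    unfolding sdf_def fnum_eq[symmetric] by simp
  have AEd: "AE \<omega> in M. \<forall>s\<in>{t..<T}. real_cond_exp M (filt M eps RV s) (LM.fnum s) \<omega> = LM.Dc s \<omega>"
    using t_ge by (subst AE_finite_all) (auto intro!: LM.D_ae)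
  define X where "X = (\<lambda>\<omega>. (\<Prod>s\<in>{t..<T}. sdf M r lm \<nu>1 \<nu>2 eps RV s \<omega>) * exp (z * logret_sum r lm eps RV t T \<omega>))"
  have XP: "AE \<omega> in M. X \<omega> = LM.Prd t \<omega>"
    using AEd by eventually_elim (simp add: X_def LM.Prd_def sdf_eq)
  have Xm: "X \<in> borel_measurable M"
    unfolding X_def sdf_def logret_sum_def logret_def by measurable
  have main: "AE \<omega> in M. real_cond_exp M (filt M eps RV t) X \<omega> = LM.Phi k t \<omega>"
  proof (rule real_cond_exp_charact_nn[OF LM.F_sfs Xm])
    show "AE x in M. 0 \<le> X x" using XP by eventually_elim (simp add: LM.Prd_nonneg)
    show "LM.Phi k t \<in> borel_measurable (filt M eps RV t)" by (rule LM.Phi_meas)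
    show "\<And>x. 0 \<le> LM.Phi k t x" by (simp add: LM.Phi_def)
    fix A assume A: "A \<in> sets (filt M eps RV t)"
    have "(\<integral>\<^sup>+ x. indicator A x * ennreal (X x) \<partial>M) = (\<integral>\<^sup>+ x. indicator A x * ennreal (LM.Prd t x) \<partial>M)"
      using XP by (intro nn_integral_cong_AE) auto
    also have "\<dots> = (\<integral>\<^sup>+ x. indicator A x * ennreal (LM.Phi k t x) \<partial>M)"
      using LM.main_ind[of k "indicator A"] tk t_ge conds A by simp
    finally show "(\<integral>\<^sup>+ x. indicator A x * ennreal (X x) \<partial>M) = (\<integral>\<^sup>+ x. indicator A x * ennreal (LM.Phi k t x) \<partial>M)" .
  qed
  have levq: "lev \<gamma>s epss RV u \<omega> = lev \<gamma> eps RV u \<omega>" for u \<omega>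
    by (simp add: lev_def \<open>\<gamma>s \<equiv> \<gamma> + lm + 1/2\<close>
        \<open>epss \<equiv> (\<lambda>u \<omega>. eps u \<omega> + (lm + 1/2) * sqrt (RV u \<omega>))\<close> algebra_simps)
  show ?thesis
    using main
  proof eventually_elim
    case (elim \<omega>)
    show ?case
      unfolding Q_cond_exp_def X_def[symmetric] elim LM.Phi_def cfeq levq k_def[symmetric] ..
  qed
qed

end
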